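(* Let $G$ be a word-hyperbolic group with a marked finite generating set $A$, let $H\le G$ be a quasiconvex subgroup, and let $Y=\Gamma(G/H,A)$ with its simplicial metric $d_Y$. Then there exists $\delta'\ge 0$ such that every geodesic bigon in $(Y,d_Y)$ is $\delta'$-thin, i.e. whenever $\alpha,\beta$ are geodesic segments in $Y$ with the same endpoints, $\alpha$ lies in the closed $\delta'$-neighborhood of $\beta$ and $\beta$ lies in the closed $\delta'$-neighborhood of $\alpha$.
   Context: A marked finite generating set of $G$ is a map $\pi:A\to G$ from a finite alphabet $A$ such that $\pi(A)$ generates $G$ (non-injective $\pi$ and $1\in\pi(A)$ allowed). The relative Cayley graph $\Gamma(G/H,A)$ has vertex set the right cosets $Hg$ ($g\in G$) and, for each $(Hg,a)\in G/H\times A$, an edge from $Hg$ to $Hg\pi(a)$ labeled $a$; all edges have length one. $H$ quasiconvex means there is $C>0$ such that every geodesic in the Cayley graph $\Gamma(G,A)$ with endpoints in $H$ lies in the $C$-neighborhood of $H$. *)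

theory Defs
  imports Complex_Main "HOL-Algebra.Coset" "HOL-Algebra.Generated_Groups"
begin

text \<open>A (multi)graph is given by a vertex set V, an edge index set E and
  source/target maps; loops and multiple edges are allowed.  A point of the
  geometric realization is either a vertex or an interior point Ed e t
  (0 < t < 1) of an edge e, at distance t from src e and 1 - t from tgt e.\<close>

datatype ('v, 'e) mgpoint = Vx 'v | Ed 'e real

definition mg_points :: "'v set \<Rightarrow> 'e set \<Rightarrow> ('v, 'e) mgpoint set" where
  "mg_points V E = Vx ` V \<union> {Ed e t | e t. e \<in> E \<and> 0 < t \<and> t < 1}"

definition mg_adj :: "'e set \<Rightarrow> ('e \<Rightarrow> 'v) \<Rightarrow> ('e \<Rightarrow> 'v) \<Rightarrow> 'v \<Rightarrow> 'v \<Rightarrow> bool" where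
  "mg_adj E src tgt u v \<longleftrightarrow>
     (\<exists>e\<in>E. (src e = u \<and> tgt e = v) \<or> (src e = v \<and> tgt e = u))"

definition mg_vdist :: "'e set \<Rightarrow> ('e \<Rightarrow> 'v) \<Rightarrow> ('e \<Rightarrow> 'v) \<Rightarrow> 'v \<Rightarrow> 'v \<Rightarrow> nat" where
  "mg_vdist E src tgt u v = (LEAST n. (mg_adj E src tgt ^^ n) u v)"

fun mg_ends :: "('e \<Rightarrow> 'v) \<Rightarrow> ('e \<Rightarrow> 'v) \<Rightarrow> ('v, 'e) mgpoint \<Rightarrow> ('v \<times> real) set" where
  "mg_ends src tgt (Vx v) = {(v, 0)}"
| "mg_ends src tgt (Ed e t) = {(src e, t), (tgt e, 1 - t)}"

fun mg_same_edge :: "('v, 'e) mgpoint \<Rightarrow> ('v, 'e) mgpoint \<Rightarrow> real set" where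
  "mg_same_edge (Ed e s) (Ed e' t) = (if e = e' then {\<bar>s - t\<bar>} else {})"
| "mg_same_edge _ _ = {}"

text \<open>The path metric of the geometric realization (simplicial metric).\<close>
definition mg_dist :: "'e set \<Rightarrow> ('e \<Rightarrow> 'v) \<Rightarrow> ('e \<Rightarrow> 'v) \<Rightarrow>
    ('v, 'e) mgpoint \<Rightarrow> ('v, 'e) mgpoint \<Rightarrow> real" where
  "mg_dist E src tgt x y =
     Min ({a + real (mg_vdist E src tgt p q) + b | p a q b.
             (p, a) \<in> mg_ends src tgt x \<and> (q, b) \<in> mg_ends src tgt y}
          \<union> mg_same_edge x y)"

definition mg_geodesic :: "'v set \<Rightarrow> 'e set \<Rightarrow> ('e \<Rightarrow> 'v) \<Rightarrow> ('e \<Rightarrow> 'v) \<Rightarrow>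
    (real \<Rightarrow> ('v, 'e) mgpoint) \<Rightarrow> real \<Rightarrow> bool" where
  "mg_geodesic V E src tgt \<gamma> L \<longleftrightarrow> 0 \<le> L \<and>
     (\<forall>s\<in>{0..L}. \<gamma> s \<in> mg_points V E) \<and>
     (\<forall>s\<in>{0..L}. \<forall>t\<in>{0..L}. mg_dist E src tgt (\<gamma> s) (\<gamma> t) = \<bar>s - t\<bar>)"

definition mg_nbhd :: "'v set \<Rightarrow> 'e set \<Rightarrow> ('e \<Rightarrow> 'v) \<Rightarrow> ('e \<Rightarrow> 'v) \<Rightarrow>
    real \<Rightarrow> ('v, 'e) mgpoint set \<Rightarrow> ('v, 'e) mgpoint set" where
  "mg_nbhd V E src tgt r S =
     {x \<in> mg_points V E. \<exists>y\<in>S. mg_dist E src tgt x y \<le> r}"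

definition marked_gen_set :: "('g, 'b) monoid_scheme \<Rightarrow> 'a set \<Rightarrow> ('a \<Rightarrow> 'g) \<Rightarrow> bool" where
  "marked_gen_set G A \<pi> \<longleftrightarrow> finite A \<and> \<pi> ` A \<subseteq> carrier G \<and>
     generate G (\<pi> ` A) = carrier G"

text \<open>Relative Cayley graph Gamma(G/H, A): vertices the right cosets H g, one
  edge (H g, a) from H g to H g pi(a) for each coset and each letter.\<close>
definition rcg_V :: "('g, 'b) monoid_scheme \<Rightarrow> 'g set \<Rightarrow> 'g set set" where
  "rcg_V G H = rcosets\<^bsub>G\<^esub> H"

definition rcg_E :: "('g, 'b) monoid_scheme \<Rightarrow> 'g set \<Rightarrow> 'a set \<Rightarrow> ('g set \<times> 'a) set" where
  "rcg_E G H A = (rcosets\<^bsub>G\<^esub> H) \<times> A"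

definition rcg_src :: "('g set \<times> 'a) \<Rightarrow> 'g set" where
  "rcg_src e = fst e"

definition rcg_tgt :: "('g, 'b) monoid_scheme \<Rightarrow> ('a \<Rightarrow> 'g) \<Rightarrow> ('g set \<times> 'a) \<Rightarrow> 'g set" where
  "rcg_tgt G \<pi> e = fst e #>\<^bsub>G\<^esub> \<pi> (snd e)"

abbreviation rcg_points where
  "rcg_points G H A \<equiv> mg_points (rcg_V G H) (rcg_E G H A)"

abbreviation rcg_dist where
  "rcg_dist G \<pi> H A \<equiv> mg_dist (rcg_E G H A) rcg_src (rcg_tgt G \<pi>)"

abbreviation rcg_geodesic where
  "rcg_geodesic G \<pi> H A \<equiv> mg_geodesic (rcg_V G H) (rcg_E G H A) rcg_src (rcg_tgt G \<pi>)"

abbreviation rcg_nbhd where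
  "rcg_nbhd G \<pi> H A \<equiv> mg_nbhd (rcg_V G H) (rcg_E G H A) rcg_src (rcg_tgt G \<pi>)"

text \<open>The Cayley graph Gamma(G, A) is the relative Cayley graph for the
  trivial subgroup; its vertex for g is the coset {g}.\<close>

definition hyperbolic_group :: "('g, 'b) monoid_scheme \<Rightarrow> 'a set \<Rightarrow> ('a \<Rightarrow> 'g) \<Rightarrow> bool" where
  "hyperbolic_group G A \<pi> \<longleftrightarrow> group G \<and> marked_gen_set G A \<pi> \<and>
     (\<exists>\<delta>\<ge>0. \<forall>\<alpha> La \<beta> Lb \<gamma> Lc.
        rcg_geodesic G \<pi> {\<one>\<^bsub>G\<^esub>} A \<alpha> La \<and> rcg_geodesic G \<pi> {\<one>\<^bsub>G\<^esub>} A \<beta> Lb \<and>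
        rcg_geodesic G \<pi> {\<one>\<^bsub>G\<^esub>} A \<gamma> Lc \<and>
        \<alpha> La = \<beta> 0 \<and> \<beta> Lb = \<gamma> 0 \<and> \<gamma> Lc = \<alpha> 0 \<longrightarrow>
        \<alpha> ` {0..La} \<subseteq> rcg_nbhd G \<pi> {\<one>\<^bsub>G\<^esub>} A \<delta> (\<beta> ` {0..Lb} \<union> \<gamma> ` {0..Lc}))"

definition quasiconvex :: "('g, 'b) monoid_scheme \<Rightarrow> 'a set \<Rightarrow> ('a \<Rightarrow> 'g) \<Rightarrow> 'g set \<Rightarrow> bool" where
  "quasiconvex G A \<pi> H \<longleftrightarrow>
     (\<exists>C>0. \<forall>\<alpha> L. rcg_geodesic G \<pi> {\<one>\<^bsub>G\<^esub>} A \<alpha> L \<and>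
        \<alpha> 0 \<in> (\<lambda>h. Vx {h}) ` H \<and> \<alpha> L \<in> (\<lambda>h. Vx {h}) ` H \<longrightarrow>
        \<alpha> ` {0..L} \<subseteq> rcg_nbhd G \<pi> {\<one>\<^bsub>G\<^esub>} A C ((\<lambda>h. Vx {h}) ` H))"

end

theory Submission
  imports Defs
begin

lemma adj_sym: "mg_adj E src tgt u v \<Longrightarrow> mg_adj E src tgt v u"
  unfolding mg_adj_def by blast

lemma pow_sym: "(mg_adj E src tgt ^^ n) u v \<Longrightarrow> (mg_adj E src tgt ^^ n) v u"
proof (induction n arbitrary: v)
  case 0 then show ?case by simp
next
  case (Suc n)
  from Suc.prems obtain w where "(mg_adj E src tgt ^^ n) u w" "mg_adj E src tgt w v"
    by (auto elim: relpowp_Suc_E)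
  then show ?case using Suc.IH adj_sym relpowp_Suc_I2 by metis
qed

lemma vd_le: "(mg_adj E src tgt ^^ n) u v \<Longrightarrow> mg_vdist E src tgt u v \<le> n"
  unfolding mg_vdist_def by (rule Least_le)

lemma vd_path: "(mg_adj E src tgt ^^ n) u v \<Longrightarrow> (mg_adj E src tgt ^^ (mg_vdist E src tgt u v)) u v"
  unfolding mg_vdist_def by (rule LeastI)

definition conn where
  "conn V E src tgt \<longleftrightarrow> (\<forall>u\<in>V. \<forall>v\<in>V. \<exists>n. (mg_adj E src tgt ^^ n) u v)"

lemma vd_sym: "conn V E src tgt \<Longrightarrow> u \<in> V \<Longrightarrow> v \<in> V \<Longrightarrow>
   mg_vdist E src tgt u v = mg_vdist E src tgt v u"
  unfolding conn_def
  by (meson antisym pow_sym vd_le vd_path)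

lemma vd_tri: "conn V E src tgt \<Longrightarrow> u \<in> V \<Longrightarrow> v \<in> V \<Longrightarrow> w \<in> V \<Longrightarrow>
   mg_vdist E src tgt u w \<le> mg_vdist E src tgt u v + mg_vdist E src tgt v w"
  unfolding conn_def
  by (meson relpowp_trans vd_le vd_path)

lemma vd_refl: "mg_vdist E src tgt u u = 0"
  using vd_le[where n=0 and u=u and v=u and E=E] by simp

lemma vd_adj: "mg_adj E src tgt u v \<Longrightarrow> mg_vdist E src tgt u v \<le> 1"
  using vd_le[where n=1 and u=u and v=v and E=E and src=src and tgt=tgt] relpowp_1 by (metis One_nat_def)

lemma vd_zero: "conn V E src tgt \<Longrightarrow> u \<in> V \<Longrightarrow> v \<in> V \<Longrightarrow> mg_vdist E src tgt u v = 0 \<Longrightarrow> u = v"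
  unfolding conn_def by (metis relpowp_0_E vd_path)


definition edges_in where "edges_in V E src tgt \<longleftrightarrow> (\<forall>e\<in>E. src e \<in> V \<and> tgt e \<in> V)"

lemma adj_in: "edges_in V E src tgt \<Longrightarrow> mg_adj E src tgt u v \<Longrightarrow> u \<in> V \<and> v \<in> V"
  unfolding edges_in_def mg_adj_def by auto

definition spath where
  "spath E src tgt f n \<longleftrightarrow> (\<forall>i<n. mg_adj E src tgt (f i) (f (Suc i))) \<and> mg_vdist E src tgt (f 0) (f n) = n"

lemma chain_pow: "(\<forall>i<n. mg_adj E src tgt (f i) (f (Suc i))) \<Longrightarrow> i \<le> k \<Longrightarrow> k \<le> n \<Longrightarrow>
   (mg_adj E src tgt ^^ (k - i)) (f i) (f k)"
proof (induction k)
  case 0 then show ?case by simp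
next
  case (Suc k)
  show ?case
  proof (cases "i = Suc k")
    case True then show ?thesis by simp
  next
    case False
    then have "i \<le> k" using Suc.prems by simp
    then have "(mg_adj E src tgt ^^ (k - i)) (f i) (f k)" using Suc by simp
    moreover have "mg_adj E src tgt (f k) (f (Suc k))" using Suc.prems by simp
    ultimately have "(mg_adj E src tgt ^^ Suc (k - i)) (f i) (f (Suc k))" by (rule relpowp_Suc_I)
    then show ?thesis using \<open>i \<le> k\<close> by (simp add: Suc_diff_le)
  qed
qed

lemma sp_in: "spath E src tgt f n \<Longrightarrow> edges_in V E src tgt \<Longrightarrow> f 0 \<in> V \<Longrightarrow> i \<le> n \<Longrightarrow> f i \<in> V"
proof (induction i)
  case 0 then show ?case by simp
next
  case (Suc i)
  have "i < n" using Suc.prems(4) by simp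
  then have "mg_adj E src tgt (f i) (f (Suc i))" using Suc.prems(1) unfolding spath_def by blast
  then show ?case using adj_in[OF Suc.prems(2)] by blast
qed

lemma sp_dist:
  assumes "spath E src tgt f n" "edges_in V E src tgt" "conn V E src tgt" "f 0 \<in> V" "i \<le> k" "k \<le> n"
  shows "mg_vdist E src tgt (f i) (f k) = k - i"
proof -
  have ch: "\<forall>i<n. mg_adj E src tgt (f i) (f (Suc i))" and d: "mg_vdist E src tgt (f 0) (f n) = n"
    using assms(1) unfolding spath_def by auto
  have V: "\<And>j. j \<le> n \<Longrightarrow> f j \<in> V" using sp_in assms by blast
  have le: "mg_vdist E src tgt (f i) (f k) \<le> k - i"
    using chain_pow[OF ch assms(5,6)] by (rule vd_le)
  have a: "mg_vdist E src tgt (f 0) (f i) \<le> i"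
    using chain_pow[OF ch, of 0 i] assms(5,6) vd_le[of "i - 0"] by simp
  have b: "mg_vdist E src tgt (f k) (f n) \<le> n - k"
    using chain_pow[OF ch, of k n] assms(6) by (intro vd_le) simp
  have Vi: "f i \<in> V" and Vk: "f k \<in> V" and Vn: "f n \<in> V" and V0: "f 0 \<in> V"
    using V assms(5,6) by auto
  have t1: "mg_vdist E src tgt (f 0) (f n) \<le> mg_vdist E src tgt (f 0) (f i) + mg_vdist E src tgt (f i) (f n)"
    by (rule vd_tri[OF assms(3) V0 Vi Vn])
  have t2: "mg_vdist E src tgt (f i) (f n) \<le> mg_vdist E src tgt (f i) (f k) + mg_vdist E src tgt (f k) (f n)"
    by (rule vd_tri[OF assms(3) Vi Vk Vn])
  have "n \<le> mg_vdist E src tgt (f 0) (f i) + mg_vdist E src tgt (f i) (f k) + mg_vdist E src tgt (f k) (f n)"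
    using t1 t2 d by linarith
  then show ?thesis using le a b assms(5,6) by linarith
qed

lemma sp_dist_sym:
  assumes "spath E src tgt f n" "edges_in V E src tgt" "conn V E src tgt" "f 0 \<in> V" "i \<le> n" "k \<le> n"
  shows "real (mg_vdist E src tgt (f i) (f k)) = \<bar>real i - real k\<bar>"
proof (cases "i \<le> k")
  case True then show ?thesis using sp_dist[OF assms(1-4) True assms(6)] by simp
next
  case False
  then have "mg_vdist E src tgt (f k) (f i) = i - k" using sp_dist[OF assms(1-4), of k i] assms by simp
  moreover have "f i \<in> V" "f k \<in> V" using sp_in assms by blast+
  ultimately show ?thesis using vd_sym[OF assms(3)] False by (simp add: of_nat_diff)
qed

lemma sp_exists:
  assumes "conn V E src tgt" "u \<in> V" "v \<in> V"
  shows "\<exists>f. f 0 = u \<and> f (mg_vdist E src tgt u v) = v \<and> spath E src tgt f (mg_vdist E src tgt u v)"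
proof -
  obtain m where "(mg_adj E src tgt ^^ m) u v" using assms unfolding conn_def by blast
  then have "(mg_adj E src tgt ^^ (mg_vdist E src tgt u v)) u v" by (rule vd_path)
  then obtain f where "f 0 = u" "f (mg_vdist E src tgt u v) = v"
     "\<forall>i<mg_vdist E src tgt u v. mg_adj E src tgt (f i) (f (Suc i))"
    unfolding relpowp_fun_conv by blast
  then show ?thesis unfolding spath_def by auto
qed

lemma sp_rev:
  assumes "spath E src tgt f n" "edges_in V E src tgt" "conn V E src tgt" "f 0 \<in> V"
  shows "spath E src tgt (\<lambda>i. f (n - i)) n"
proof -
  have "\<forall>i<n. mg_adj E src tgt (f (n - i)) (f (n - Suc i))"
  proof (intro allI impI)
    fix i assume "i < n"
    then have "mg_adj E src tgt (f (n - Suc i)) (f (Suc (n - Suc i)))" using assms(1) unfolding spath_def by auto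
    moreover have "Suc (n - Suc i) = n - i" using \<open>i < n\<close> by simp
    ultimately show "mg_adj E src tgt (f (n - i)) (f (n - Suc i))" using adj_sym by metis
  qed
  moreover have "mg_vdist E src tgt (f n) (f 0) = n"
    using vd_sym[OF assms(3)] sp_in[OF assms(1,2,4)] assms(1) unfolding spath_def by auto
  ultimately show ?thesis unfolding spath_def by simp
qed


definition edge_of where
  "edge_of E src tgt u v = (SOME e. e \<in> E \<and> ((src e = u \<and> tgt e = v) \<or> (src e = v \<and> tgt e = u)))"

lemma edge_of: "mg_adj E src tgt u v \<Longrightarrow> edge_of E src tgt u v \<in> E \<and>
   ((src (edge_of E src tgt u v) = u \<and> tgt (edge_of E src tgt u v) = v) \<or>
    (src (edge_of E src tgt u v) = v \<and> tgt (edge_of E src tgt u v) = u))"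
  unfolding edge_of_def mg_adj_def by (rule someI_ex) blast

definition gpt where
  "gpt E src tgt f s = (if s = of_int \<lfloor>s\<rfloor> then Vx (f (nat \<lfloor>s\<rfloor>)) else
     (let j = nat \<lfloor>s\<rfloor>; e = edge_of E src tgt (f j) (f (Suc j)) in
       Ed e (if src e = f j then s - of_int \<lfloor>s\<rfloor> else 1 - (s - of_int \<lfloor>s\<rfloor>))))"

lemma nonint_facts:
  fixes s :: real
  assumes "s \<noteq> of_int \<lfloor>s\<rfloor>" "0 \<le> s" "s \<le> real n"
  shows "nat \<lfloor>s\<rfloor> < n" "0 < s - of_int \<lfloor>s\<rfloor>" "s - of_int \<lfloor>s\<rfloor> < 1"
    "\<lceil>s\<rceil> = \<lfloor>s\<rfloor> + 1" "0 \<le> \<lfloor>s\<rfloor>"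
proof -
  show c: "\<lceil>s\<rceil> = \<lfloor>s\<rfloor> + 1" using assms(1) ceiling_altdef by metis
  have "of_int \<lfloor>s\<rfloor> \<le> s" by simp
  then show "0 < s - of_int \<lfloor>s\<rfloor>" using assms(1) by linarith
  show "s - of_int \<lfloor>s\<rfloor> < 1" by linarith
  show "0 \<le> \<lfloor>s\<rfloor>" using assms(2) by simp
  have "s < of_int \<lfloor>s\<rfloor> + 1" by linarith
  have "of_int \<lfloor>s\<rfloor> < s" using \<open>0 < s - of_int \<lfloor>s\<rfloor>\<close> by simp
  then have "\<lfloor>s\<rfloor> < int n" using assms(3) by linarith
  then show "nat \<lfloor>s\<rfloor> < n" using \<open>0 \<le> \<lfloor>s\<rfloor>\<close> by (simp add: nat_less_iff)
qed

lemma ends_gpt: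
  fixes s :: real
  assumes sp: "spath E src tgt f n" and s: "0 \<le> s" "s \<le> real n"
  shows "mg_ends src tgt (gpt E src tgt f s) =
     {(f (nat \<lfloor>s\<rfloor>), s - of_int \<lfloor>s\<rfloor>), (f (nat \<lceil>s\<rceil>), of_int \<lceil>s\<rceil> - s)}"
proof (cases "s = of_int \<lfloor>s\<rfloor>")
  case True
  then have "\<lceil>s\<rceil> = \<lfloor>s\<rfloor>" using ceiling_altdef by metis
  then show ?thesis using True unfolding gpt_def by simp
next
  case False
  note nf = nonint_facts[OF False s]
  define j where "j = nat \<lfloor>s\<rfloor>"
  define e where "e = edge_of E src tgt (f j) (f (Suc j))"
  have adj: "mg_adj E src tgt (f j) (f (Suc j))" using sp nf(1) unfolding spath_def j_def by blast
  have eo: "(src e = f j \<and> tgt e = f (Suc j)) \<or> (src e = f (Suc j) \<and> tgt e = f j)"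
    using edge_of[OF adj] unfolding e_def by blast
  have g: "gpt E src tgt f s = Ed e (if src e = f j then s - of_int \<lfloor>s\<rfloor> else 1 - (s - of_int \<lfloor>s\<rfloor>))"
    using False unfolding gpt_def j_def e_def Let_def by simp
  have c: "nat \<lceil>s\<rceil> = Suc j" using nf unfolding j_def by simp
  have c2: "of_int \<lceil>s\<rceil> - s = 1 - (s - of_int \<lfloor>s\<rfloor>)" using nf(4) by simp
  show ?thesis unfolding g c c2 using eo by (auto simp: j_def)
qed

lemma gpt_points:
  fixes s :: real
  assumes sp: "spath E src tgt f n" and ei: "edges_in V E src tgt" and f0: "f 0 \<in> V"
    and s: "0 \<le> s" "s \<le> real n"
  shows "gpt E src tgt f s \<in> mg_points V E"
proof (cases "s = of_int \<lfloor>s\<rfloor>")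
  case True
  have "nat \<lfloor>s\<rfloor> \<le> n" using s by linarith
  then have "f (nat \<lfloor>s\<rfloor>) \<in> V" using sp_in[OF sp ei f0] by blast
  then show ?thesis using True unfolding gpt_def mg_points_def by simp
next
  case False
  note nf = nonint_facts[OF False s]
  define j where "j = nat \<lfloor>s\<rfloor>"
  define e where "e = edge_of E src tgt (f j) (f (Suc j))"
  have adj: "mg_adj E src tgt (f j) (f (Suc j))" using sp nf(1) unfolding spath_def j_def by blast
  have eE: "e \<in> E" using edge_of[OF adj] unfolding e_def by blast
  have g: "gpt E src tgt f s = Ed e (if src e = f j then s - of_int \<lfloor>s\<rfloor> else 1 - (s - of_int \<lfloor>s\<rfloor>))"
    using False unfolding gpt_def j_def e_def Let_def by simp
  show ?thesis unfolding g mg_points_def using eE nf(2,3) by auto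
qed

lemma gpt_int: "gpt E src tgt f (real i) = Vx (f i)"
  unfolding gpt_def by simp


lemma sp_inj:
  assumes "spath E src tgt f n" "edges_in V E src tgt" "conn V E src tgt" "f 0 \<in> V"
    "i \<le> n" "k \<le> n" "f i = f k"
  shows "i = k"
  using sp_dist_sym[OF assms(1-6)] assms(7) vd_refl by (metis abs_eq_0 eq_iff_diff_eq_0 of_nat_0 of_nat_eq_iff)

lemma ends_gpt_mem:
  fixes s :: real
  assumes sp: "spath E src tgt f n" and s: "0 \<le> s" "s \<le> real n"
    and pa: "(p, a) \<in> mg_ends src tgt (gpt E src tgt f s)"
  shows "\<exists>i. 0 \<le> i \<and> i \<le> int n \<and> p = f (nat i) \<and> a = \<bar>s - of_int i\<bar>"
proof -
  have "\<lfloor>s\<rfloor> \<le> \<lceil>s\<rceil>" by simp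
  have a1: "0 \<le> \<lfloor>s\<rfloor>" using s by simp
  have a2: "\<lceil>s\<rceil> \<le> int n" using s by (simp add: ceiling_le_iff)
  have b1: "s - of_int \<lfloor>s\<rfloor> = \<bar>s - of_int \<lfloor>s\<rfloor>\<bar>" by simp
  have b2: "of_int \<lceil>s\<rceil> - s = \<bar>s - of_int \<lceil>s\<rceil>\<bar>" by simp
  from pa[unfolded ends_gpt[OF sp s]] show ?thesis
    using a1 a2 b1 b2 \<open>\<lfloor>s\<rfloor> \<le> \<lceil>s\<rceil>\<close>
    by (metis (no_types, lifting) empty_iff insert_iff order_trans prod.inject)
qed

lemma same_edge_gpt:
  fixes s t :: real
  assumes sp: "spath E src tgt f n" "edges_in V E src tgt" "conn V E src tgt" "f 0 \<in> V"
    and s: "0 \<le> s" "s \<le> real n" and t: "0 \<le> t" "t \<le> real n"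
  shows "mg_same_edge (gpt E src tgt f s) (gpt E src tgt f t) \<subseteq> {\<bar>s - t\<bar>}"
proof (cases "s = of_int \<lfloor>s\<rfloor> \<or> t = of_int \<lfloor>t\<rfloor>")
  case True
  then show ?thesis
  proof
    assume "s = of_int \<lfloor>s\<rfloor>"
    then show ?thesis unfolding gpt_def by simp
  next
    assume "t = of_int \<lfloor>t\<rfloor>"
    then have "gpt E src tgt f t = Vx (f (nat \<lfloor>t\<rfloor>))" unfolding gpt_def by simp
    then show ?thesis by (cases "gpt E src tgt f s") auto
  qed
next
  case False
  then have Fs: "s \<noteq> of_int \<lfloor>s\<rfloor>" and Ft: "t \<noteq> of_int \<lfloor>t\<rfloor>" by auto
  note ns = nonint_facts[OF Fs s] and nt = nonint_facts[OF Ft t]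
  define j where "j = nat \<lfloor>s\<rfloor>"
  define k where "k = nat \<lfloor>t\<rfloor>"
  define e where "e = edge_of E src tgt (f j) (f (Suc j))"
  define e' where "e' = edge_of E src tgt (f k) (f (Suc k))"
  have adj: "mg_adj E src tgt (f j) (f (Suc j))" using sp(1) ns(1) unfolding spath_def j_def by blast
  have adj': "mg_adj E src tgt (f k) (f (Suc k))" using sp(1) nt(1) unfolding spath_def k_def by blast
  have eo: "(src e = f j \<and> tgt e = f (Suc j)) \<or> (src e = f (Suc j) \<and> tgt e = f j)"
    using edge_of[OF adj] unfolding e_def by blast
  have eo': "(src e' = f k \<and> tgt e' = f (Suc k)) \<or> (src e' = f (Suc k) \<and> tgt e' = f k)"
    using edge_of[OF adj'] unfolding e'_def by blast
  have g: "gpt E src tgt f s = Ed e (if src e = f j then s - of_int \<lfloor>s\<rfloor> else 1 - (s - of_int \<lfloor>s\<rfloor>))"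
    using Fs unfolding gpt_def j_def e_def Let_def by simp
  have g': "gpt E src tgt f t = Ed e' (if src e' = f k then t - of_int \<lfloor>t\<rfloor> else 1 - (t - of_int \<lfloor>t\<rfloor>))"
    using Ft unfolding gpt_def k_def e'_def Let_def by simp
  show ?thesis
  proof (cases "e = e'")
    case False then show ?thesis unfolding g g' by simp
  next
    case True
    have jn: "Suc j \<le> n" and kn: "Suc k \<le> n" using ns(1) nt(1) unfolding j_def k_def by auto
    have inj: "\<And>a b. a \<le> n \<Longrightarrow> b \<le> n \<Longrightarrow> f a = f b \<Longrightarrow> a = b" using sp_inj[OF sp] by blast
    have s1: "{f j, f (Suc j)} = {f k, f (Suc k)}" using eo eo' True by auto
    have "f j = f k \<or> f j = f (Suc k)" using s1 by blast
    then have h1: "j = k \<or> j = Suc k" using inj jn kn by force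
    have "f (Suc j) = f k \<or> f (Suc j) = f (Suc k)" using s1 by blast
    then have h2: "Suc j = k \<or> Suc j = Suc k" using inj jn kn by force
    have "j = k" using h1 h2 by linarith
    then have jk: "\<lfloor>s\<rfloor> = \<lfloor>t\<rfloor>" unfolding j_def k_def using ns(5) nt(5) by (metis nat_eq_iff2)
    show ?thesis unfolding g g' using True \<open>j = k\<close> jk by (auto simp: abs_if)
  qed
qed


lemma ends_finite: "finite (mg_ends src tgt x)"
  by (cases x) auto

lemma same_edge_finite: "finite (mg_same_edge x y)"
  by (cases x; cases y) simp_all

lemma dist_set_finite:
  "finite ({a + real (mg_vdist E src tgt p q) + b | p a q b.
     (p, a) \<in> mg_ends src tgt x \<and> (q, b) \<in> mg_ends src tgt y} \<union> mg_same_edge x y)"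
proof -
  have s: "{a + real (mg_vdist E src tgt p q) + b | p a q b.
     (p, a) \<in> mg_ends src tgt x \<and> (q, b) \<in> mg_ends src tgt y} \<subseteq>
     {(\<lambda>pa qb. snd pa + real (mg_vdist E src tgt (fst pa) (fst qb)) + snd qb) pa qb | pa qb. pa \<in> mg_ends src tgt x \<and> qb \<in> mg_ends src tgt y}"
    apply (rule subsetI)
    apply (elim CollectE exE conjE)
    apply (rule CollectI)
    apply (rule_tac x="(p,a)" in exI)
    apply (rule_tac x="(q,b)" in exI)
    apply (intro conjI)
      apply (simp only: fst_conv snd_conv)
     apply assumption
    apply assumption
    done
  have f: "finite {(\<lambda>pa qb. snd pa + real (mg_vdist E src tgt (fst pa) (fst qb)) + snd qb) pa qb | pa qb. pa \<in> mg_ends src tgt x \<and> qb \<in> mg_ends src tgt y}"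
    apply (rule finite_image_set2)
    unfolding Collect_mem_eq
     apply (rule ends_finite)
    apply (rule ends_finite)
    done
  show ?thesis using finite_subset[OF s f] same_edge_finite[of x y] by (rule finite_UnI)
qed

lemma gpt_dist:
  fixes s t :: real
  assumes sp: "spath E src tgt f n" "edges_in V E src tgt" "conn V E src tgt" "f 0 \<in> V"
    and s: "0 \<le> s" "s \<le> real n" and t: "0 \<le> t" "t \<le> real n"
  shows "mg_dist E src tgt (gpt E src tgt f s) (gpt E src tgt f t) = \<bar>s - t\<bar>"
proof -
  define S1 where "S1 = {a + real (mg_vdist E src tgt p q) + b | p a q b.
     (p, a) \<in> mg_ends src tgt (gpt E src tgt f s) \<and> (q, b) \<in> mg_ends src tgt (gpt E src tgt f t)}"
  define S2 where "S2 = mg_same_edge (gpt E src tgt f s) (gpt E src tgt f t)"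
  have fin: "finite (S1 \<union> S2)" unfolding S1_def S2_def by (rule dist_set_finite)
  have vdI: "\<And>i k. 0 \<le> i \<Longrightarrow> i \<le> int n \<Longrightarrow> 0 \<le> k \<Longrightarrow> k \<le> int n \<Longrightarrow>
      real (mg_vdist E src tgt (f (nat i)) (f (nat k))) = \<bar>of_int i - of_int k\<bar>"
  proof -
    fix i k :: int assume "0 \<le> i" "i \<le> int n" "0 \<le> k" "k \<le> int n"
    then have "nat i \<le> n" "nat k \<le> n" by auto
    from sp_dist_sym[OF sp this] show "real (mg_vdist E src tgt (f (nat i)) (f (nat k))) = \<bar>of_int i - of_int k\<bar>"
      using \<open>0 \<le> i\<close> \<open>0 \<le> k\<close> by simp
  qed
  have lower: "\<bar>s - t\<bar> \<le> y" if "y \<in> S1 \<union> S2" for y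
  proof (cases "y \<in> S2")
    case True then show ?thesis using same_edge_gpt[OF sp s t] unfolding S2_def by auto
  next
    case False
    then have "y \<in> S1" using that by blast
    then obtain p a q b where y: "y = a + real (mg_vdist E src tgt p q) + b"
      and pa: "(p, a) \<in> mg_ends src tgt (gpt E src tgt f s)"
      and qb: "(q, b) \<in> mg_ends src tgt (gpt E src tgt f t)" unfolding S1_def by blast
    obtain i where i: "0 \<le> i" "i \<le> int n" "p = f (nat i)" "a = \<bar>s - of_int i\<bar>"
      using ends_gpt_mem[OF sp(1) s pa] by blast
    obtain k where k: "0 \<le> k" "k \<le> int n" "q = f (nat k)" "b = \<bar>t - of_int k\<bar>"
      using ends_gpt_mem[OF sp(1) t qb] by blast
    have "y = \<bar>s - of_int i\<bar> + \<bar>of_int i - of_int k\<bar> + \<bar>t - of_int k\<bar>"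
      using y i k vdI by simp
    then show ?thesis by linarith
  qed
  have mem: "\<bar>s - t\<bar> \<in> S1 \<union> S2"
  proof -
    have E1: "(f (nat \<lfloor>s\<rfloor>), s - of_int \<lfloor>s\<rfloor>) \<in> mg_ends src tgt (gpt E src tgt f s)"
      "(f (nat \<lceil>s\<rceil>), of_int \<lceil>s\<rceil> - s) \<in> mg_ends src tgt (gpt E src tgt f s)"
      using ends_gpt[OF sp(1) s] by auto
    have E2: "(f (nat \<lfloor>t\<rfloor>), t - of_int \<lfloor>t\<rfloor>) \<in> mg_ends src tgt (gpt E src tgt f t)"
      "(f (nat \<lceil>t\<rceil>), of_int \<lceil>t\<rceil> - t) \<in> mg_ends src tgt (gpt E src tgt f t)"
      using ends_gpt[OF sp(1) t] by auto
    have b: "0 \<le> \<lfloor>s\<rfloor>" "0 \<le> \<lfloor>t\<rfloor>" "\<lceil>s\<rceil> \<le> int n" "\<lceil>t\<rceil> \<le> int n" "0 \<le> \<lceil>s\<rceil>" "0 \<le> \<lceil>t\<rceil>"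
      "\<lfloor>s\<rfloor> \<le> int n" "\<lfloor>t\<rfloor> \<le> int n"
      using s t by (auto simp: ceiling_le_iff le_floor_iff floor_le_iff)
    consider (A) "\<lceil>s\<rceil> \<le> \<lfloor>t\<rfloor>" | (B) "\<lceil>t\<rceil> \<le> \<lfloor>s\<rfloor>" | (C) "\<not> \<lceil>s\<rceil> \<le> \<lfloor>t\<rfloor>" "\<not> \<lceil>t\<rceil> \<le> \<lfloor>s\<rfloor>" by blast
    then show ?thesis
    proof cases
      case A
      have v: "real (mg_vdist E src tgt (f (nat \<lceil>s\<rceil>)) (f (nat \<lfloor>t\<rfloor>))) = of_int \<lfloor>t\<rfloor> - of_int \<lceil>s\<rceil>"
        using vdI[of "\<lceil>s\<rceil>" "\<lfloor>t\<rfloor>"] b A by simp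
      have "(of_int \<lceil>s\<rceil> - s) + real (mg_vdist E src tgt (f (nat \<lceil>s\<rceil>)) (f (nat \<lfloor>t\<rfloor>))) + (t - of_int \<lfloor>t\<rfloor>) \<in> S1"
        unfolding S1_def using E1(2) E2(1) by blast
      moreover have "(of_int \<lceil>s\<rceil> - s) + real (mg_vdist E src tgt (f (nat \<lceil>s\<rceil>)) (f (nat \<lfloor>t\<rfloor>))) + (t - of_int \<lfloor>t\<rfloor>) = \<bar>s - t\<bar>"
        using v A le_of_int_ceiling[of s] of_int_floor_le[of t]
        by (smt (verit) of_int_le_iff)
      ultimately show ?thesis by simp
    next
      case B
      have v: "real (mg_vdist E src tgt (f (nat \<lfloor>s\<rfloor>)) (f (nat \<lceil>t\<rceil>))) = of_int \<lfloor>s\<rfloor> - of_int \<lceil>t\<rceil>"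
        using vdI[of "\<lfloor>s\<rfloor>" "\<lceil>t\<rceil>"] b B by simp
      have "(s - of_int \<lfloor>s\<rfloor>) + real (mg_vdist E src tgt (f (nat \<lfloor>s\<rfloor>)) (f (nat \<lceil>t\<rceil>))) + (of_int \<lceil>t\<rceil> - t) \<in> S1"
        unfolding S1_def using E1(1) E2(2) by blast
      moreover have "(s - of_int \<lfloor>s\<rfloor>) + real (mg_vdist E src tgt (f (nat \<lfloor>s\<rfloor>)) (f (nat \<lceil>t\<rceil>))) + (of_int \<lceil>t\<rceil> - t) = \<bar>s - t\<bar>"
        using v B le_of_int_ceiling[of t] of_int_floor_le[of s]
        by (smt (verit) of_int_le_iff)
      ultimately show ?thesis by simp
    next
      case C
      have cs: "\<lceil>s\<rceil> = (if s = of_int \<lfloor>s\<rfloor> then \<lfloor>s\<rfloor> else \<lfloor>s\<rfloor> + 1)" by (rule ceiling_altdef)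
      have ct: "\<lceil>t\<rceil> = (if t = of_int \<lfloor>t\<rfloor> then \<lfloor>t\<rfloor> else \<lfloor>t\<rfloor> + 1)" by (rule ceiling_altdef)
      have Fs: "s \<noteq> of_int \<lfloor>s\<rfloor>" and Ft: "t \<noteq> of_int \<lfloor>t\<rfloor>" and fl: "\<lfloor>s\<rfloor> = \<lfloor>t\<rfloor>"
        using C cs ct by (auto split: if_splits)
      have "S2 = {\<bar>s - t\<bar>}"
        unfolding S2_def gpt_def using Fs Ft fl by (simp add: Let_def abs_if)
      then show ?thesis by simp
    qed
  qed
  have "Min (S1 \<union> S2) = \<bar>s - t\<bar>" using Min_eqI[OF fin lower mem] .
  then show ?thesis unfolding mg_dist_def S1_def S2_def .
qed

lemma gpt_geodesic:
  assumes sp: "spath E src tgt f n" "edges_in V E src tgt" "conn V E src tgt" "f 0 \<in> V"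
  shows "mg_geodesic V E src tgt (gpt E src tgt f) (real n)"
  unfolding mg_geodesic_def using gpt_dist[OF sp] gpt_points[OF sp(1,2,4)] by auto


lemma ends_props:
  assumes "x \<in> mg_points V E" "edges_in V E src tgt" "(p, a) \<in> mg_ends src tgt x"
  shows "p \<in> V \<and> 0 \<le> a \<and> a \<le> 1"
  using assms unfolding mg_points_def edges_in_def by (cases x) auto

lemma edge_ends_close:
  assumes "e \<in> E" "p \<in> {src e, tgt e}" "q \<in> {src e, tgt e}"
  shows "mg_vdist E src tgt p q \<le> 1"
proof -
  have "p = q \<or> mg_adj E src tgt p q" using assms unfolding mg_adj_def by auto
  then show ?thesis using vd_refl vd_adj by (metis le_numeral_extra(1) zero_le)
qed

lemma ends_close:
  assumes "x \<in> mg_points V E" "(p, a) \<in> mg_ends src tgt x" "(p', a') \<in> mg_ends src tgt x"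
  shows "mg_vdist E src tgt p p' \<le> 1"
proof (cases x)
  case (Vx v) then show ?thesis using assms by (simp add: vd_refl)
next
  case (Ed e t)
  then have "e \<in> E" using assms(1) unfolding mg_points_def by auto
  then show ?thesis using assms Ed edge_ends_close[of e E p src tgt p'] by auto
qed

lemma ends_ex: "\<exists>p a. (p, a) \<in> mg_ends src tgt x"
  by (cases x) auto

lemma dist_upper:
  assumes "x \<in> mg_points V E" "w \<in> mg_points V E" "edges_in V E src tgt"
    "(p, a) \<in> mg_ends src tgt x" "(q, b) \<in> mg_ends src tgt w"
  shows "mg_dist E src tgt x w \<le> real (mg_vdist E src tgt p q) + 2"
proof -
  have "a + real (mg_vdist E src tgt p q) + b \<in>
    {a + real (mg_vdist E src tgt p q) + b | p a q b.
     (p, a) \<in> mg_ends src tgt x \<and> (q, b) \<in> mg_ends src tgt w} \<union> mg_same_edge x w"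
    using assms(4,5) by blast
  then have "mg_dist E src tgt x w \<le> a + real (mg_vdist E src tgt p q) + b"
    unfolding mg_dist_def using dist_set_finite by (rule Min_le[rotated])
  moreover have "a \<le> 1" "b \<le> 1" using ends_props assms by metis+
  ultimately show ?thesis by linarith
qed

lemma dist_lower:
  assumes "x \<in> mg_points V E" "w \<in> mg_points V E" "edges_in V E src tgt" "conn V E src tgt"
    "(p, a) \<in> mg_ends src tgt x" "(q, b) \<in> mg_ends src tgt w"
  shows "real (mg_vdist E src tgt p q) \<le> mg_dist E src tgt x w + 2"
proof -
  define S where "S = {a + real (mg_vdist E src tgt p q) + b | p a q b.
     (p, a) \<in> mg_ends src tgt x \<and> (q, b) \<in> mg_ends src tgt w} \<union> mg_same_edge x w"
  have ne: "S \<noteq> {}" unfolding S_def using assms(5,6) by blast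
  have "Min S \<in> S" using Min_in[OF _ ne] dist_set_finite unfolding S_def by blast
  then have m: "mg_dist E src tgt x w \<in> S" unfolding mg_dist_def S_def .
  have pV: "p \<in> V" and qV: "q \<in> V" using ends_props assms by metis+
  show ?thesis
  proof (cases "mg_dist E src tgt x w \<in> mg_same_edge x w")
    case True
    then obtain e s t where xs: "x = Ed e s" "w = Ed e t" "mg_dist E src tgt x w = \<bar>s - t\<bar>"
      by (cases x; cases w) (auto split: if_splits)
    have "e \<in> E" using assms(1) xs unfolding mg_points_def by auto
    have "p \<in> {src e, tgt e}" "q \<in> {src e, tgt e}" using assms(5,6) xs by auto
    then have "mg_vdist E src tgt p q \<le> 1" using edge_ends_close \<open>e \<in> E\<close> by metis
    then show ?thesis using xs by simp
  next
    case False
    then obtain p' a' q' b' where d: "mg_dist E src tgt x w = a' + real (mg_vdist E src tgt p' q') + b'"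
      and pa: "(p', a') \<in> mg_ends src tgt x" and qb: "(q', b') \<in> mg_ends src tgt w"
      using m unfolding S_def by blast
    have p'V: "p' \<in> V" and q'V: "q' \<in> V" and "0 \<le> a'" "0 \<le> b'" using ends_props assms pa qb by metis+
    have c1: "mg_vdist E src tgt p p' \<le> 1" using ends_close assms(1,5) pa by metis
    have c2: "mg_vdist E src tgt q' q \<le> 1" using ends_close assms(2,6) qb by metis
    have "mg_vdist E src tgt p q \<le> mg_vdist E src tgt p p' + mg_vdist E src tgt p' q"
      by (rule vd_tri[OF assms(4) pV p'V qV])
    moreover have "mg_vdist E src tgt p' q \<le> mg_vdist E src tgt p' q' + mg_vdist E src tgt q' q"
      by (rule vd_tri[OF assms(4) p'V q'V qV])
    ultimately have "mg_vdist E src tgt p q \<le> mg_vdist E src tgt p' q' + 2" using c1 c2 by linarith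
    then show ?thesis using d \<open>0 \<le> a'\<close> \<open>0 \<le> b'\<close> by linarith
  qed
qed

lemma dist_vx: "mg_dist E src tgt (Vx u) (Vx v) = real (mg_vdist E src tgt u v)"
  unfolding mg_dist_def by simp


context group
begin

lemma sing_coset: "{g} #> x = {g \<otimes> x}"
  unfolding r_coset_def by simp

lemma rcosets_one: "rcosets {\<one>} = {{g} | g. g \<in> carrier G}"
  unfolding RCOSETS_def r_coset_def by auto

lemma adjX:
  "mg_adj (rcg_E G {\<one>} A) rcg_src (rcg_tgt G \<pi>) U W \<longleftrightarrow>
   (\<exists>g\<in>carrier G. \<exists>x\<in>A. (U = {g} \<and> W = {g \<otimes> \<pi> x}) \<or> (W = {g} \<and> U = {g \<otimes> \<pi> x}))"
proof
  assume "mg_adj (rcg_E G {\<one>} A) rcg_src (rcg_tgt G \<pi>) U W"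
  then obtain e where e: "e \<in> (rcosets {\<one>}) \<times> A"
    "(fst e = U \<and> fst e #> \<pi> (snd e) = W) \<or> (fst e = W \<and> fst e #> \<pi> (snd e) = U)"
    unfolding mg_adj_def rcg_E_def rcg_src_def rcg_tgt_def by blast
  obtain g x where "e = ({g}, x)" "g \<in> carrier G" "x \<in> A" using e(1) unfolding rcosets_one by blast
  then show "\<exists>g\<in>carrier G. \<exists>x\<in>A. (U = {g} \<and> W = {g \<otimes> \<pi> x}) \<or> (W = {g} \<and> U = {g \<otimes> \<pi> x})"
    using e(2) by (auto simp: sing_coset)
next
  assume "\<exists>g\<in>carrier G. \<exists>x\<in>A. (U = {g} \<and> W = {g \<otimes> \<pi> x}) \<or> (W = {g} \<and> U = {g \<otimes> \<pi> x})"
  then obtain g x where gx: "g \<in> carrier G" "x \<in> A" "(U = {g} \<and> W = {g \<otimes> \<pi> x}) \<or> (W = {g} \<and> U = {g \<otimes> \<pi> x})"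
    by blast
  have "({g}, x) \<in> rcg_E G {\<one>} A" unfolding rcg_E_def rcosets_one using gx by blast
  then show "mg_adj (rcg_E G {\<one>} A) rcg_src (rcg_tgt G \<pi>) U W"
    unfolding mg_adj_def rcg_src_def rcg_tgt_def using gx(3) sing_coset
    by (metis fst_conv snd_conv)
qed

lemma adjY:
  "mg_adj (rcg_E G H A) rcg_src (rcg_tgt G \<pi>) U W \<longleftrightarrow>
   (\<exists>C\<in>rcosets H. \<exists>x\<in>A. (U = C \<and> W = C #> \<pi> x) \<or> (W = C \<and> U = C #> \<pi> x))"
  unfolding mg_adj_def rcg_E_def rcg_src_def rcg_tgt_def
  by auto

lemma edges_inX:
  assumes "\<pi> ` A \<subseteq> carrier G"
  shows "edges_in (rcg_V G {\<one>}) (rcg_E G {\<one>} A) rcg_src (rcg_tgt G \<pi>)"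
  unfolding edges_in_def
proof (intro ballI conjI)
  fix e assume "e \<in> rcg_E G {\<one>} A"
  then obtain g x where e: "e = ({g}, x)" "g \<in> carrier G" "x \<in> A" unfolding rcg_E_def rcosets_one by blast
  show "rcg_src e \<in> rcg_V G {\<one>}" unfolding rcg_V_def rcosets_one rcg_src_def using e by auto
  have "g \<otimes> \<pi> x \<in> carrier G" using e assms by blast
  then show "rcg_tgt G \<pi> e \<in> rcg_V G {\<one>}" unfolding rcg_V_def rcosets_one rcg_tgt_def using e
    by (auto simp: sing_coset)
qed

lemma edges_inY:
  assumes "\<pi> ` A \<subseteq> carrier G" "subgroup H G"
  shows "edges_in (rcg_V G H) (rcg_E G H A) rcg_src (rcg_tgt G \<pi>)"
  unfolding edges_in_def rcg_V_def rcg_E_def rcg_src_def rcg_tgt_def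
proof (intro ballI conjI)
  fix e assume "e \<in> (rcosets H) \<times> A"
  then obtain C x where e: "e = (C, x)" "C \<in> rcosets H" "x \<in> A" by blast
  then obtain g where g: "g \<in> carrier G" "C = H #> g" unfolding RCOSETS_def by blast
  show "fst e \<in> rcosets H" using e by simp
  have "C #> \<pi> x = H #> (g \<otimes> \<pi> x)"
    using coset_mult_assoc[of H g "\<pi> x"] g assms e subgroup.subset by blast
  moreover have "g \<otimes> \<pi> x \<in> carrier G" using g assms e by blast
  moreover have "H #> (g \<otimes> \<pi> x) \<in> rcosets H"
    using rcosetsI[OF subgroup.subset[OF assms(2)] \<open>g \<otimes> \<pi> x \<in> carrier G\<close>] .
  ultimately show "fst e #> \<pi> (snd e) \<in> rcosets H"
    using e by simp
qed

lemma adjX_step: "g \<in> carrier G \<Longrightarrow> x \<in> A \<Longrightarrow>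
   mg_adj (rcg_E G {\<one>} A) rcg_src (rcg_tgt G \<pi>) {g} {g \<otimes> \<pi> x}"
  unfolding adjX by blast

lemma adjX_step': "g \<in> carrier G \<Longrightarrow> x \<in> A \<Longrightarrow>
   mg_adj (rcg_E G {\<one>} A) rcg_src (rcg_tgt G \<pi>) {g \<otimes> \<pi> x} {g}"
  unfolding adjX by blast

lemma connX_gen:
  assumes "\<pi> ` A \<subseteq> carrier G" "g \<in> generate G (\<pi> ` A)"
  shows "\<forall>a\<in>carrier G. \<exists>n. (mg_adj (rcg_E G {\<one>} A) rcg_src (rcg_tgt G \<pi>) ^^ n) {a} {a \<otimes> g}"
  using assms(2)
proof (induction g rule: generate.induct)
  case one
  show ?case
  proof
    fix a assume "a \<in> carrier G"
    then have "{a} = {a \<otimes> \<one>}" by simp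
    then have "(mg_adj (rcg_E G {\<one>} A) rcg_src (rcg_tgt G \<pi>) ^^ 0) {a} {a \<otimes> \<one>}" by simp
    then show "\<exists>n. (mg_adj (rcg_E G {\<one>} A) rcg_src (rcg_tgt G \<pi>) ^^ n) {a} {a \<otimes> \<one>}" by blast
  qed
next
  case (incl h)
  show ?case
  proof
    fix a assume a: "a \<in> carrier G"
    obtain x where x: "x \<in> A" "h = \<pi> x" using incl.hyps by (rule imageE) blast
    have "mg_adj (rcg_E G {\<one>} A) rcg_src (rcg_tgt G \<pi>) {a} {a \<otimes> \<pi> x}"
      by (rule adjX_step[OF a x(1)])
    then have "mg_adj (rcg_E G {\<one>} A) rcg_src (rcg_tgt G \<pi>) {a} {a \<otimes> h}"
      unfolding x(2) .
    then have "(mg_adj (rcg_E G {\<one>} A) rcg_src (rcg_tgt G \<pi>) ^^ 1) {a} {a \<otimes> h}" by (simp only: relpowp_1)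
    then show "\<exists>n. (mg_adj (rcg_E G {\<one>} A) rcg_src (rcg_tgt G \<pi>) ^^ n) {a} {a \<otimes> h}" by blast
  qed
next
  case (inv h)
  show ?case
  proof
    fix a assume a: "a \<in> carrier G"
    obtain x where x: "x \<in> A" "h = \<pi> x" using inv.hyps by (rule imageE) blast
    have hc: "h \<in> carrier G" using x assms(1) by blast
    have c: "a \<otimes> inv h \<in> carrier G" using a hc by simp
    have e: "a \<otimes> inv h \<otimes> \<pi> x = a" using a hc x by (simp add: m_assoc)
    have "mg_adj (rcg_E G {\<one>} A) rcg_src (rcg_tgt G \<pi>) {a \<otimes> inv h \<otimes> \<pi> x} {a \<otimes> inv h}"
      by (rule adjX_step'[OF c x(1)])
    then have "mg_adj (rcg_E G {\<one>} A) rcg_src (rcg_tgt G \<pi>) {a} {a \<otimes> inv h}"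
      unfolding e .
    then have "(mg_adj (rcg_E G {\<one>} A) rcg_src (rcg_tgt G \<pi>) ^^ 1) {a} {a \<otimes> inv h}" by (simp only: relpowp_1)
    then show "\<exists>n. (mg_adj (rcg_E G {\<one>} A) rcg_src (rcg_tgt G \<pi>) ^^ n) {a} {a \<otimes> inv h}" by blast
  qed
next
  case (eng h1 h2)
  show ?case
  proof
    fix a assume a: "a \<in> carrier G"
    have c1: "h1 \<in> carrier G" "h2 \<in> carrier G"
      using eng.hyps generate_in_carrier[OF assms(1)] by (meson subsetD)+
    obtain n1 where n1: "(mg_adj (rcg_E G {\<one>} A) rcg_src (rcg_tgt G \<pi>) ^^ n1) {a} {a \<otimes> h1}"
      using eng.IH(1) a by blast
    have ah1: "a \<otimes> h1 \<in> carrier G" using a c1 by simp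
    obtain n2 where n2: "(mg_adj (rcg_E G {\<one>} A) rcg_src (rcg_tgt G \<pi>) ^^ n2) {a \<otimes> h1} {a \<otimes> h1 \<otimes> h2}"
      using eng.IH(2) ah1 by blast
    have "a \<otimes> h1 \<otimes> h2 = a \<otimes> (h1 \<otimes> h2)" using a c1 by (simp add: m_assoc)
    then have "(mg_adj (rcg_E G {\<one>} A) rcg_src (rcg_tgt G \<pi>) ^^ (n1 + n2)) {a} {a \<otimes> (h1 \<otimes> h2)}"
      using relpowp_trans[OF n1 n2] by simp
    then show "\<exists>n. (mg_adj (rcg_E G {\<one>} A) rcg_src (rcg_tgt G \<pi>) ^^ n) {a} {a \<otimes> (h1 \<otimes> h2)}"
      by blast
  qed
qed

lemma connX:
  assumes "marked_gen_set G A \<pi>"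
  shows "conn (rcg_V G {\<one>}) (rcg_E G {\<one>} A) rcg_src (rcg_tgt G \<pi>)"
  unfolding conn_def rcg_V_def rcosets_one
proof (intro ballI)
  fix u v assume "u \<in> {{g} |g. g \<in> carrier G}" "v \<in> {{g} |g. g \<in> carrier G}"
  then obtain a b where ab: "u = {a}" "v = {b}" "a \<in> carrier G" "b \<in> carrier G" by blast
  have pA: "\<pi> ` A \<subseteq> carrier G" using assms unfolding marked_gen_set_def by blast
  have "inv a \<otimes> b \<in> carrier G" using ab by simp
  then have "inv a \<otimes> b \<in> generate G (\<pi> ` A)" using assms unfolding marked_gen_set_def by simp
  then obtain n where "(mg_adj (rcg_E G {\<one>} A) rcg_src (rcg_tgt G \<pi>) ^^ n) {a} {a \<otimes> (inv a \<otimes> b)}"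
    using connX_gen[OF pA] ab(3) by blast
  moreover have "a \<otimes> (inv a \<otimes> b) = b" using ab by (simp add: m_assoc[symmetric])
  ultimately show "\<exists>n. (mg_adj (rcg_E G {\<one>} A) rcg_src (rcg_tgt G \<pi>) ^^ n) u v" using ab(1,2) by auto
qed

end

context group
begin

lemma adjY_step:
  assumes "subgroup H G" "\<pi> ` A \<subseteq> carrier G" "g \<in> carrier G" "x \<in> A"
  shows "mg_adj (rcg_E G H A) rcg_src (rcg_tgt G \<pi>) (H #> g) (H #> (g \<otimes> \<pi> x))"
    "mg_adj (rcg_E G H A) rcg_src (rcg_tgt G \<pi>) (H #> (g \<otimes> \<pi> x)) (H #> g)"
proof -
  have C: "H #> g \<in> rcosets H" using rcosetsI[OF subgroup.subset[OF assms(1)] assms(3)] .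
  have px: "\<pi> x \<in> carrier G" using assms(2,4) by blast
  have e: "(H #> g) #> \<pi> x = H #> (g \<otimes> \<pi> x)"
    by (rule coset_mult_assoc[OF subgroup.subset[OF assms(1)] assms(3) px])
  show "mg_adj (rcg_E G H A) rcg_src (rcg_tgt G \<pi>) (H #> g) (H #> (g \<otimes> \<pi> x))"
    unfolding adjY using C assms(4) e by blast
  show "mg_adj (rcg_E G H A) rcg_src (rcg_tgt G \<pi>) (H #> (g \<otimes> \<pi> x)) (H #> g)"
    unfolding adjY using C assms(4) e by blast
qed

lemma hcoset: "subgroup H G \<Longrightarrow> h \<in> H \<Longrightarrow> b \<in> carrier G \<Longrightarrow> H #> (h \<otimes> b) = H #> b"
proof -
  assume H: "subgroup H G" and h: "h \<in> H" and b: "b \<in> carrier G"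
  have hc: "h \<in> carrier G" using H h subgroup.subset by blast
  have "H #> (h \<otimes> b) = (H #> h) #> b"
    using coset_mult_assoc[OF subgroup.subset[OF H] hc b] by simp
  also have "H #> h = H" using subgroup.rcos_const[OF H is_group h] .
  finally show ?thesis .
qed

lemma liftA:
  assumes "subgroup H G" "\<pi> ` A \<subseteq> carrier G" "a \<in> carrier G"
  shows "(mg_adj (rcg_E G {\<one>} A) rcg_src (rcg_tgt G \<pi>) ^^ n) {a} U \<Longrightarrow>
    \<exists>b\<in>carrier G. U = {b} \<and> (mg_adj (rcg_E G H A) rcg_src (rcg_tgt G \<pi>) ^^ n) (H #> a) (H #> b)"
proof (induction n arbitrary: U)
  case 0
  then have "U = {a}" by simp
  then show ?case using assms(3) by simp
next
  case (Suc n)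
  from Suc.prems obtain W where W: "(mg_adj (rcg_E G {\<one>} A) rcg_src (rcg_tgt G \<pi>) ^^ n) {a} W"
    "mg_adj (rcg_E G {\<one>} A) rcg_src (rcg_tgt G \<pi>) W U" by (rule relpowp_Suc_E)
  obtain w where w: "w \<in> carrier G" "W = {w}"
    "(mg_adj (rcg_E G H A) rcg_src (rcg_tgt G \<pi>) ^^ n) (H #> a) (H #> w)"
    using Suc.IH[OF W(1)] by blast
  obtain g x where gx: "g \<in> carrier G" "x \<in> A" "(W = {g} \<and> U = {g \<otimes> \<pi> x}) \<or> (U = {g} \<and> W = {g \<otimes> \<pi> x})"
    using W(2) unfolding adjX by blast
  have px: "\<pi> x \<in> carrier G" using assms(2) gx(2) by blast
  show ?case
  proof (cases "W = {g} \<and> U = {g \<otimes> \<pi> x}")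
    case True
    then have "w = g" using w by simp
    have "mg_adj (rcg_E G H A) rcg_src (rcg_tgt G \<pi>) (H #> w) (H #> (w \<otimes> \<pi> x))"
      using adjY_step(1)[OF assms(1,2) w(1) gx(2)] .
    then have "(mg_adj (rcg_E G H A) rcg_src (rcg_tgt G \<pi>) ^^ Suc n) (H #> a) (H #> (w \<otimes> \<pi> x))"
      using w(3) by (rule relpowp_Suc_I[rotated])
    moreover have "w \<otimes> \<pi> x \<in> carrier G" using w(1) px by simp
    ultimately show ?thesis using True \<open>w = g\<close> by blast
  next
    case False
    then have U: "U = {g}" and "W = {g \<otimes> \<pi> x}" using gx(3) by auto
    then have "w = g \<otimes> \<pi> x" using w by simp
    have "mg_adj (rcg_E G H A) rcg_src (rcg_tgt G \<pi>) (H #> (g \<otimes> \<pi> x)) (H #> g)"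
      using adjY_step(2)[OF assms(1,2) gx(1) gx(2)] .
    then have "(mg_adj (rcg_E G H A) rcg_src (rcg_tgt G \<pi>) ^^ Suc n) (H #> a) (H #> g)"
      using w(3) \<open>w = g \<otimes> \<pi> x\<close> by (metis relpowp_Suc_I)
    then show ?thesis using U gx(1) by blast
  qed
qed

lemma liftB:
  assumes "subgroup H G" "\<pi> ` A \<subseteq> carrier G" "a \<in> carrier G"
  shows "(mg_adj (rcg_E G H A) rcg_src (rcg_tgt G \<pi>) ^^ n) (H #> a) U \<Longrightarrow>
    \<exists>b\<in>carrier G. U = H #> b \<and> (mg_adj (rcg_E G {\<one>} A) rcg_src (rcg_tgt G \<pi>) ^^ n) {a} {b}"
proof (induction n arbitrary: U)
  case 0
  then have "U = H #> a" by simp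
  then show ?case using assms(3) by simp
next
  case (Suc n)
  from Suc.prems obtain W where W: "(mg_adj (rcg_E G H A) rcg_src (rcg_tgt G \<pi>) ^^ n) (H #> a) W"
    "mg_adj (rcg_E G H A) rcg_src (rcg_tgt G \<pi>) W U" by (rule relpowp_Suc_E)
  obtain b' where b': "b' \<in> carrier G" "W = H #> b'"
    "(mg_adj (rcg_E G {\<one>} A) rcg_src (rcg_tgt G \<pi>) ^^ n) {a} {b'}"
    using Suc.IH[OF W(1)] by blast
  obtain C x where Cx: "C \<in> rcosets H" "x \<in> A" "(W = C \<and> U = C #> \<pi> x) \<or> (U = C \<and> W = C #> \<pi> x)"
    using W(2) unfolding adjY by blast
  have px: "\<pi> x \<in> carrier G" using assms(2) Cx(2) by blast
  have Hs: "H \<subseteq> carrier G" using subgroup.subset[OF assms(1)] .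
  show ?case
  proof (cases "W = C \<and> U = C #> \<pi> x")
    case True
    then have "U = H #> (b' \<otimes> \<pi> x)" using b'(2) coset_mult_assoc[OF Hs b'(1) px] by simp
    moreover have "(mg_adj (rcg_E G {\<one>} A) rcg_src (rcg_tgt G \<pi>) ^^ Suc n) {a} {b' \<otimes> \<pi> x}"
      using b'(3) adjX_step[OF b'(1) Cx(2)] by (rule relpowp_Suc_I)
    moreover have "b' \<otimes> \<pi> x \<in> carrier G" using b'(1) px by simp
    ultimately show ?thesis by blast
  next
    case False
    then have U: "U = C" and W2: "W = C #> \<pi> x" using Cx(3) by auto
    obtain c where c: "c \<in> carrier G" "C = H #> c" using Cx(1) unfolding RCOSETS_def by blast
    define b where "b = b' \<otimes> inv (\<pi> x)"
    have bc: "b \<in> carrier G" unfolding b_def using b'(1) px by simp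
    have "H #> b' = H #> (c \<otimes> \<pi> x)" using b'(2) W2 c(2) coset_mult_assoc[OF Hs c(1) px] by simp
    then have "H #> b = H #> (c \<otimes> \<pi> x \<otimes> inv (\<pi> x))" unfolding b_def
      using coset_mult_assoc[OF Hs b'(1) inv_closed[OF px]] coset_mult_assoc[OF Hs _ inv_closed[OF px], of "c \<otimes> \<pi> x"]
        c(1) px by simp
    also have "c \<otimes> \<pi> x \<otimes> inv (\<pi> x) = c" using c(1) px by (simp add: m_assoc)
    finally have "U = H #> b" using U c(2) by simp
    moreover have "b \<otimes> \<pi> x = b'" unfolding b_def using b'(1) px by (simp add: m_assoc)
    then have "mg_adj (rcg_E G {\<one>} A) rcg_src (rcg_tgt G \<pi>) {b'} {b}"
      using adjX_step'[where \<pi>=\<pi>, OF bc Cx(2)] by simp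
    then have "(mg_adj (rcg_E G {\<one>} A) rcg_src (rcg_tgt G \<pi>) ^^ Suc n) {a} {b}"
      using b'(3) by (rule relpowp_Suc_I[rotated])
    ultimately show ?thesis using bc by blast
  qed
qed

end

context group
begin

lemma VX_mem: "g \<in> carrier G \<Longrightarrow> {g} \<in> rcg_V G {\<one>}"
  unfolding rcg_V_def rcosets_one by blast

lemma VX_cases: "U \<in> rcg_V G {\<one>} \<Longrightarrow> \<exists>g\<in>carrier G. U = {g}"
  unfolding rcg_V_def rcosets_one by blast

lemma connY:
  assumes "subgroup H G" "marked_gen_set G A \<pi>"
  shows "conn (rcg_V G H) (rcg_E G H A) rcg_src (rcg_tgt G \<pi>)"
  unfolding conn_def
proof (intro ballI)
  fix U W assume "U \<in> rcg_V G H" "W \<in> rcg_V G H"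
  then obtain a b where ab: "a \<in> carrier G" "b \<in> carrier G" "U = H #> a" "W = H #> b"
    unfolding rcg_V_def RCOSETS_def by blast
  have pA: "\<pi> ` A \<subseteq> carrier G" using assms(2) unfolding marked_gen_set_def by blast
  obtain n where "(mg_adj (rcg_E G {\<one>} A) rcg_src (rcg_tgt G \<pi>) ^^ n) {a} {b}"
    using connX[OF assms(2)] VX_mem ab unfolding conn_def by blast
  then obtain b0 where "b0 \<in> carrier G" "{b} = {b0}"
    "(mg_adj (rcg_E G H A) rcg_src (rcg_tgt G \<pi>) ^^ n) (H #> a) (H #> b0)"
    using liftA[OF assms(1) pA ab(1)] by blast
  then show "\<exists>n. (mg_adj (rcg_E G H A) rcg_src (rcg_tgt G \<pi>) ^^ n) U W" using ab by auto
qed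

lemma dY_le:
  assumes "subgroup H G" "marked_gen_set G A \<pi>" "a \<in> carrier G" "b \<in> carrier G" "h \<in> H"
  shows "mg_vdist (rcg_E G H A) rcg_src (rcg_tgt G \<pi>) (H #> a) (H #> b)
     \<le> mg_vdist (rcg_E G {\<one>} A) rcg_src (rcg_tgt G \<pi>) {a} {h \<otimes> b}"
proof -
  have pA: "\<pi> ` A \<subseteq> carrier G" using assms(2) unfolding marked_gen_set_def by blast
  have hb: "h \<otimes> b \<in> carrier G" using assms(1,4,5) subgroup.subset by blast
  obtain n where "(mg_adj (rcg_E G {\<one>} A) rcg_src (rcg_tgt G \<pi>) ^^ n) {a} {h \<otimes> b}"
    using connX[OF assms(2)] VX_mem assms(3) hb unfolding conn_def by blast
  then have p: "(mg_adj (rcg_E G {\<one>} A) rcg_src (rcg_tgt G \<pi>) ^^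
     (mg_vdist (rcg_E G {\<one>} A) rcg_src (rcg_tgt G \<pi>) {a} {h \<otimes> b})) {a} {h \<otimes> b}"
    by (rule vd_path)
  obtain b0 where "b0 \<in> carrier G" "{h \<otimes> b} = {b0}"
    "(mg_adj (rcg_E G H A) rcg_src (rcg_tgt G \<pi>) ^^ (mg_vdist (rcg_E G {\<one>} A) rcg_src (rcg_tgt G \<pi>) {a} {h \<otimes> b}))
       (H #> a) (H #> b0)"
    using liftA[OF assms(1) pA assms(3) p] by blast
  then have "(mg_adj (rcg_E G H A) rcg_src (rcg_tgt G \<pi>) ^^ (mg_vdist (rcg_E G {\<one>} A) rcg_src (rcg_tgt G \<pi>) {a} {h \<otimes> b}))
       (H #> a) (H #> b)"
    using hcoset[OF assms(1,5,4)] by simp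
  then show ?thesis by (rule vd_le)
qed

lemma dY_attained:
  assumes "subgroup H G" "marked_gen_set G A \<pi>" "a \<in> carrier G" "b \<in> carrier G"
  shows "\<exists>b'\<in>carrier G. H #> b' = H #> b \<and>
     mg_vdist (rcg_E G {\<one>} A) rcg_src (rcg_tgt G \<pi>) {a} {b'} =
     mg_vdist (rcg_E G H A) rcg_src (rcg_tgt G \<pi>) (H #> a) (H #> b)"
proof -
  have pA: "\<pi> ` A \<subseteq> carrier G" using assms(2) unfolding marked_gen_set_def by blast
  have Hs: "H \<subseteq> carrier G" using subgroup.subset[OF assms(1)] .
  have V: "H #> a \<in> rcg_V G H" "H #> b \<in> rcg_V G H"
    unfolding rcg_V_def using rcosetsI[OF Hs] assms(3,4) by auto
  obtain n where "(mg_adj (rcg_E G H A) rcg_src (rcg_tgt G \<pi>) ^^ n) (H #> a) (H #> b)"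
    using connY[OF assms(1,2)] V unfolding conn_def by blast
  then have p: "(mg_adj (rcg_E G H A) rcg_src (rcg_tgt G \<pi>) ^^
    (mg_vdist (rcg_E G H A) rcg_src (rcg_tgt G \<pi>) (H #> a) (H #> b))) (H #> a) (H #> b)"
    by (rule vd_path)
  obtain b' where b': "b' \<in> carrier G" "H #> b = H #> b'"
    "(mg_adj (rcg_E G {\<one>} A) rcg_src (rcg_tgt G \<pi>) ^^
      (mg_vdist (rcg_E G H A) rcg_src (rcg_tgt G \<pi>) (H #> a) (H #> b))) {a} {b'}"
    using liftB[OF assms(1) pA assms(3) p] by blast
  have le1: "mg_vdist (rcg_E G {\<one>} A) rcg_src (rcg_tgt G \<pi>) {a} {b'} \<le>
     mg_vdist (rcg_E G H A) rcg_src (rcg_tgt G \<pi>) (H #> a) (H #> b)"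
    using b'(3) by (rule vd_le)
  have "mg_vdist (rcg_E G H A) rcg_src (rcg_tgt G \<pi>) (H #> a) (H #> b') \<le>
     mg_vdist (rcg_E G {\<one>} A) rcg_src (rcg_tgt G \<pi>) {a} {\<one> \<otimes> b'}"
    using dY_le[OF assms(1,2,3) b'(1) subgroup.one_closed[OF assms(1)]] .
  then have le2: "mg_vdist (rcg_E G H A) rcg_src (rcg_tgt G \<pi>) (H #> a) (H #> b) \<le>
     mg_vdist (rcg_E G {\<one>} A) rcg_src (rcg_tgt G \<pi>) {a} {b'}"
    using b'(1,2) by simp
  show ?thesis using le1 le2 b' by (intro bexI[of _ b']) auto
qed

lemma f_attained:
  assumes "subgroup H G" "marked_gen_set G A \<pi>" "a \<in> carrier G"
  shows "\<exists>h\<in>H. mg_vdist (rcg_E G {\<one>} A) rcg_src (rcg_tgt G \<pi>) {a} {h} =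
     mg_vdist (rcg_E G H A) rcg_src (rcg_tgt G \<pi>) (H #> a) H"
proof -
  have Hs: "H \<subseteq> carrier G" using subgroup.subset[OF assms(1)] .
  have H1: "H #> \<one> = H" using coset_mult_one[OF Hs] .
  obtain b' where b': "b' \<in> carrier G" "H #> b' = H #> \<one>"
     "mg_vdist (rcg_E G {\<one>} A) rcg_src (rcg_tgt G \<pi>) {a} {b'} =
     mg_vdist (rcg_E G H A) rcg_src (rcg_tgt G \<pi>) (H #> a) (H #> \<one>)"
    using dY_attained[OF assms one_closed] by blast
  have "b' \<in> H" using rcos_self[OF b'(1) assms(1)] b'(2) H1 by simp
  then show ?thesis using b'(3) H1 by auto
qed

lemma f_le:
  assumes "subgroup H G" "marked_gen_set G A \<pi>" "a \<in> carrier G" "h \<in> H"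
  shows "mg_vdist (rcg_E G H A) rcg_src (rcg_tgt G \<pi>) (H #> a) H \<le>
     mg_vdist (rcg_E G {\<one>} A) rcg_src (rcg_tgt G \<pi>) {a} {h}"
proof -
  have Hs: "H \<subseteq> carrier G" using subgroup.subset[OF assms(1)] .
  have H1: "H #> \<one> = H" using coset_mult_one[OF Hs] .
  have hc: "h \<in> carrier G" using Hs assms(4) by blast
  show ?thesis using dY_le[OF assms(1,2,3) one_closed assms(4)] H1 hc by simp
qed

end

context group
begin

lemma gpt0: "gpt E src tgt f 0 = Vx (f 0)"
  using gpt_int[of E src tgt f 0] by simp

lemma XT:
  assumes mg: "marked_gen_set G A \<pi>"
    and thin: "\<forall>\<alpha> La \<beta> Lb \<gamma> Lc.
        rcg_geodesic G \<pi> {\<one>} A \<alpha> La \<and> rcg_geodesic G \<pi> {\<one>} A \<beta> Lb \<and>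
        rcg_geodesic G \<pi> {\<one>} A \<gamma> Lc \<and>
        \<alpha> La = \<beta> 0 \<and> \<beta> Lb = \<gamma> 0 \<and> \<gamma> Lc = \<alpha> 0 \<longrightarrow>
        \<alpha> ` {0..La} \<subseteq> rcg_nbhd G \<pi> {\<one>} A \<delta> (\<beta> ` {0..Lb} \<union> \<gamma> ` {0..Lc})"
    and sp1: "spath (rcg_E G {\<one>} A) rcg_src (rcg_tgt G \<pi>) f1 n1"
    and sp2: "spath (rcg_E G {\<one>} A) rcg_src (rcg_tgt G \<pi>) f2 n2"
    and sp3: "spath (rcg_E G {\<one>} A) rcg_src (rcg_tgt G \<pi>) f3 n3"
    and V0: "f1 0 \<in> rcg_V G {\<one>}"
    and c1: "f1 n1 = f2 0" and c2: "f2 n2 = f3 0" and c3: "f3 n3 = f1 0"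
    and i: "i \<le> n1"
  shows "\<exists>j. (j \<le> n2 \<and> real (mg_vdist (rcg_E G {\<one>} A) rcg_src (rcg_tgt G \<pi>) (f1 i) (f2 j)) \<le> \<delta> + 2) \<or>
             (j \<le> n3 \<and> real (mg_vdist (rcg_E G {\<one>} A) rcg_src (rcg_tgt G \<pi>) (f1 i) (f3 j)) \<le> \<delta> + 2)"
proof -
  let ?V = "rcg_V G {\<one>}" and ?E = "rcg_E G {\<one>} A" and ?t = "rcg_tgt G \<pi>"
  have pA: "\<pi> ` A \<subseteq> carrier G" using mg unfolding marked_gen_set_def by blast
  have ei: "edges_in ?V ?E rcg_src ?t" using edges_inX[OF pA] .
  have cn: "conn ?V ?E rcg_src ?t" using connX[OF mg] .
  have V2: "f2 0 \<in> ?V" using sp_in[OF sp1 ei V0, of n1] c1 by simp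
  have V3: "f3 0 \<in> ?V" using sp_in[OF sp2 ei V2, of n2] c2 by simp
  have g1: "rcg_geodesic G \<pi> {\<one>} A (gpt ?E rcg_src ?t f1) (real n1)" using gpt_geodesic[OF sp1 ei cn V0] .
  have g2: "rcg_geodesic G \<pi> {\<one>} A (gpt ?E rcg_src ?t f2) (real n2)" using gpt_geodesic[OF sp2 ei cn V2] .
  have g3: "rcg_geodesic G \<pi> {\<one>} A (gpt ?E rcg_src ?t f3) (real n3)" using gpt_geodesic[OF sp3 ei cn V3] .
  have e1: "gpt ?E rcg_src ?t f1 (real n1) = gpt ?E rcg_src ?t f2 0" using c1 by (simp add: gpt_int gpt0)
  have e2: "gpt ?E rcg_src ?t f2 (real n2) = gpt ?E rcg_src ?t f3 0" using c2 by (simp add: gpt_int gpt0)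
  have e3: "gpt ?E rcg_src ?t f3 (real n3) = gpt ?E rcg_src ?t f1 0" using c3 by (simp add: gpt_int gpt0)
  have sub: "gpt ?E rcg_src ?t f1 ` {0..real n1} \<subseteq>
     rcg_nbhd G \<pi> {\<one>} A \<delta> (gpt ?E rcg_src ?t f2 ` {0..real n2} \<union> gpt ?E rcg_src ?t f3 ` {0..real n3})"
    by (rule thin[rule_format, OF conjI[OF g1 conjI[OF g2 conjI[OF g3 conjI[OF e1 conjI[OF e2 e3]]]]]])
  have "gpt ?E rcg_src ?t f1 (real i) \<in> gpt ?E rcg_src ?t f1 ` {0..real n1}" using i by auto
  then have "gpt ?E rcg_src ?t f1 (real i) \<in> rcg_nbhd G \<pi> {\<one>} A \<delta> (gpt ?E rcg_src ?t f2 ` {0..real n2} \<union> gpt ?E rcg_src ?t f3 ` {0..real n3})"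
    using sub by (rule subsetD[rotated])
  then have "Vx (f1 i) \<in> rcg_nbhd G \<pi> {\<one>} A \<delta> (gpt ?E rcg_src ?t f2 ` {0..real n2} \<union> gpt ?E rcg_src ?t f3 ` {0..real n3})"
    unfolding gpt_int .
  then obtain y where y: "y \<in> gpt ?E rcg_src ?t f2 ` {0..real n2} \<union> gpt ?E rcg_src ?t f3 ` {0..real n3}"
    "mg_dist ?E rcg_src ?t (Vx (f1 i)) y \<le> \<delta>" and px: "Vx (f1 i) \<in> mg_points ?V ?E"
    unfolding mg_nbhd_def by blast
  have ex: "(f1 i, 0) \<in> mg_ends rcg_src ?t (Vx (f1 i))" by simp
  show ?thesis
  proof (cases "y \<in> gpt ?E rcg_src ?t f2 ` {0..real n2}")
    case True
    then obtain s where s: "0 \<le> s" "s \<le> real n2" "y = gpt ?E rcg_src ?t f2 s" by auto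
    have ey: "(f2 (nat \<lfloor>s\<rfloor>), s - of_int \<lfloor>s\<rfloor>) \<in> mg_ends rcg_src ?t y"
      using ends_gpt[OF sp2 s(1,2)] s(3) by simp
    have py: "y \<in> mg_points ?V ?E" using gpt_points[OF sp2 ei V2 s(1,2)] s(3) by simp
    have "real (mg_vdist ?E rcg_src ?t (f1 i) (f2 (nat \<lfloor>s\<rfloor>))) \<le> mg_dist ?E rcg_src ?t (Vx (f1 i)) y + 2"
      using dist_lower[OF px py ei cn ex ey] .
    moreover have "nat \<lfloor>s\<rfloor> \<le> n2" using s by (simp add: nat_le_iff floor_le_iff)
    ultimately show ?thesis using y(2) by (intro exI[of _ "nat \<lfloor>s\<rfloor>"]) auto
  next
    case False
    then have "y \<in> gpt ?E rcg_src ?t f3 ` {0..real n3}" using y(1) by blast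
    then obtain s where s: "0 \<le> s" "s \<le> real n3" "y = gpt ?E rcg_src ?t f3 s" by auto
    have ey: "(f3 (nat \<lfloor>s\<rfloor>), s - of_int \<lfloor>s\<rfloor>) \<in> mg_ends rcg_src ?t y"
      using ends_gpt[OF sp3 s(1,2)] s(3) by simp
    have py: "y \<in> mg_points ?V ?E" using gpt_points[OF sp3 ei V3 s(1,2)] s(3) by simp
    have "real (mg_vdist ?E rcg_src ?t (f1 i) (f3 (nat \<lfloor>s\<rfloor>))) \<le> mg_dist ?E rcg_src ?t (Vx (f1 i)) y + 2"
      using dist_lower[OF px py ei cn ex ey] .
    moreover have "nat \<lfloor>s\<rfloor> \<le> n3" using s by (simp add: nat_le_iff floor_le_iff)
    ultimately show ?thesis using y(2) by (intro exI[of _ "nat \<lfloor>s\<rfloor>"]) auto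
  qed
qed

lemma XQ:
  assumes mg: "marked_gen_set G A \<pi>"
    and qc: "\<forall>\<alpha> L. rcg_geodesic G \<pi> {\<one>} A \<alpha> L \<and>
        \<alpha> 0 \<in> (\<lambda>h. Vx {h}) ` H \<and> \<alpha> L \<in> (\<lambda>h. Vx {h}) ` H \<longrightarrow>
        \<alpha> ` {0..L} \<subseteq> rcg_nbhd G \<pi> {\<one>} A C ((\<lambda>h. Vx {h}) ` H)"
    and sp: "spath (rcg_E G {\<one>} A) rcg_src (rcg_tgt G \<pi>) f n"
    and H: "subgroup H G"
    and h1: "h1 \<in> H" "f 0 = {h1}" and h2: "h2 \<in> H" "f n = {h2}"
    and i: "i \<le> n"
  shows "\<exists>h\<in>H. real (mg_vdist (rcg_E G {\<one>} A) rcg_src (rcg_tgt G \<pi>) (f i) {h}) \<le> C"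
proof -
  let ?V = "rcg_V G {\<one>}" and ?E = "rcg_E G {\<one>} A" and ?t = "rcg_tgt G \<pi>"
  have pA: "\<pi> ` A \<subseteq> carrier G" using mg unfolding marked_gen_set_def by blast
  have ei: "edges_in ?V ?E rcg_src ?t" using edges_inX[OF pA] .
  have cn: "conn ?V ?E rcg_src ?t" using connX[OF mg] .
  have "h1 \<in> carrier G" using h1(1) subgroup.subset[OF H] by blast
  then have V0: "f 0 \<in> ?V" unfolding h1(2) by (rule VX_mem)
  have g: "rcg_geodesic G \<pi> {\<one>} A (gpt ?E rcg_src ?t f) (real n)" using gpt_geodesic[OF sp ei cn V0] .
  have a0: "gpt ?E rcg_src ?t f 0 \<in> (\<lambda>h. Vx {h}) ` H" unfolding gpt0 h1(2) using h1(1) by (rule imageI)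
  have aL: "gpt ?E rcg_src ?t f (real n) \<in> (\<lambda>h. Vx {h}) ` H" unfolding gpt_int h2(2) using h2(1) by (rule imageI)
  have sub: "gpt ?E rcg_src ?t f ` {0..real n} \<subseteq> rcg_nbhd G \<pi> {\<one>} A C ((\<lambda>h. Vx {h}) ` H)"
    by (rule qc[rule_format, OF conjI[OF g conjI[OF a0 aL]]])
  have "gpt ?E rcg_src ?t f (real i) \<in> gpt ?E rcg_src ?t f ` {0..real n}" using i by auto
  then have "gpt ?E rcg_src ?t f (real i) \<in> rcg_nbhd G \<pi> {\<one>} A C ((\<lambda>h. Vx {h}) ` H)"
    using sub by (rule subsetD[rotated])
  then have "Vx (f i) \<in> rcg_nbhd G \<pi> {\<one>} A C ((\<lambda>h. Vx {h}) ` H)"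
    unfolding gpt_int .
  then obtain y where "y \<in> (\<lambda>h. Vx {h}) ` H" "mg_dist ?E rcg_src ?t (Vx (f i)) y \<le> C"
    unfolding mg_nbhd_def by blast
  then obtain h where "h \<in> H" "mg_dist ?E rcg_src ?t (Vx (f i)) (Vx {h}) \<le> C"
    by blast
  then show ?thesis unfolding dist_vx by blast
qed

end

locale hypctx = group G for G (structure) +
  fixes A :: "'a set" and \<pi> :: "'a \<Rightarrow> 'g" and H :: "'g set" and D :: real and Q :: real
  assumes mg: "marked_gen_set G A \<pi>" and sub: "subgroup H G" and D0: "0 \<le> D" and Q0: "0 \<le> Q"
  and tri: "\<And>f1 n1 f2 n2 f3 n3 i.
     spath (rcg_E G {\<one>} A) rcg_src (rcg_tgt G \<pi>) f1 n1 \<Longrightarrow>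
     spath (rcg_E G {\<one>} A) rcg_src (rcg_tgt G \<pi>) f2 n2 \<Longrightarrow>
     spath (rcg_E G {\<one>} A) rcg_src (rcg_tgt G \<pi>) f3 n3 \<Longrightarrow>
     f1 0 \<in> rcg_V G {\<one>} \<Longrightarrow> f1 n1 = f2 0 \<Longrightarrow> f2 n2 = f3 0 \<Longrightarrow> f3 n3 = f1 0 \<Longrightarrow> i \<le> n1 \<Longrightarrow>
     \<exists>j. (j \<le> n2 \<and> real (mg_vdist (rcg_E G {\<one>} A) rcg_src (rcg_tgt G \<pi>) (f1 i) (f2 j)) \<le> D) \<or>
         (j \<le> n3 \<and> real (mg_vdist (rcg_E G {\<one>} A) rcg_src (rcg_tgt G \<pi>) (f1 i) (f3 j)) \<le> D)"
  and qc: "\<And>f n h1 h2 i. spath (rcg_E G {\<one>} A) rcg_src (rcg_tgt G \<pi>) f n \<Longrightarrow>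
     h1 \<in> H \<Longrightarrow> f 0 = {h1} \<Longrightarrow> h2 \<in> H \<Longrightarrow> f n = {h2} \<Longrightarrow> i \<le> n \<Longrightarrow>
     \<exists>h\<in>H. real (mg_vdist (rcg_E G {\<one>} A) rcg_src (rcg_tgt G \<pi>) (f i) {h}) \<le> Q"
begin

abbreviation "XE \<equiv> rcg_E G {\<one>} A"
abbreviation "Xt \<equiv> rcg_tgt G \<pi>"
abbreviation "XV \<equiv> rcg_V G {\<one>}"
abbreviation "dX u v \<equiv> real (mg_vdist XE rcg_src Xt u v)"

lemma pA: "\<pi> ` A \<subseteq> carrier G" using mg unfolding marked_gen_set_def by blast
lemma eiX: "edges_in XV XE rcg_src Xt" using edges_inX[OF pA] .
lemma cnX: "conn XV XE rcg_src Xt" using connX[OF mg] .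

lemma dX_tri: "u \<in> XV \<Longrightarrow> v \<in> XV \<Longrightarrow> w \<in> XV \<Longrightarrow> dX u w \<le> dX u v + dX v w"
  using vd_tri[OF cnX] by (metis of_nat_add of_nat_le_iff)

lemma dX_sym: "u \<in> XV \<Longrightarrow> v \<in> XV \<Longrightarrow> dX u v = dX v u"
  using vd_sym[OF cnX] by metis

definition seg where
  "seg u v S \<longleftrightarrow> u \<in> XV \<and> (\<exists>f n. spath XE rcg_src Xt f n \<and> f 0 = u \<and> f n = v \<and> S = f ` {..n})"

lemma seg_exists: "u \<in> XV \<Longrightarrow> v \<in> XV \<Longrightarrow> \<exists>S. seg u v S"
proof -
  assume u: "u \<in> XV" and v: "v \<in> XV"
  obtain f where f: "f 0 = u" "f (mg_vdist XE rcg_src Xt u v) = v" "spath XE rcg_src Xt f (mg_vdist XE rcg_src Xt u v)"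
    using sp_exists[OF cnX u v] by blast
  have "seg u v (f ` {..mg_vdist XE rcg_src Xt u v})"
    unfolding seg_def using u f by blast
  then show ?thesis by blast
qed

lemma seg_sub:
  assumes "seg u v S" shows "S \<subseteq> XV" "u \<in> S" "v \<in> S" "u \<in> XV" "v \<in> XV"
proof -
  obtain f n where f: "spath XE rcg_src Xt f n" "f 0 = u" "f n = v" "S = f ` {..n}" "u \<in> XV"
    using assms unfolding seg_def by blast
  have fin: "\<And>i. i \<le> n \<Longrightarrow> f i \<in> XV" using sp_in[OF f(1) eiX] f(2,5) by blast
  show "S \<subseteq> XV" unfolding f(4) using fin by blast
  show "u \<in> S" unfolding f(4) using f(2) by (metis atMost_iff image_eqI le0)
  show "v \<in> S" unfolding f(4) using f(3) by (metis atMost_iff image_eqI order_refl)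
  show "u \<in> XV" using f(5) .
  show "v \<in> XV" using fin[of n] f(3) by simp
qed

lemma seg_sym:
  assumes "seg u v S" shows "seg v u S"
proof -
  obtain f n where f: "spath XE rcg_src Xt f n" "f 0 = u" "f n = v" "S = f ` {..n}" "u \<in> XV"
    using assms unfolding seg_def by blast
  have "spath XE rcg_src Xt (\<lambda>i. f (n - i)) n" using sp_rev[OF f(1) eiX cnX] f by simp
  moreover have "f ` {..n} = (\<lambda>i. f (n - i)) ` {..n}"
  proof
    show "f ` {..n} \<subseteq> (\<lambda>i. f (n - i)) ` {..n}"
    proof
      fix x assume "x \<in> f ` {..n}"
      then obtain i where "i \<le> n" "x = f i" by auto
      then have "x = f (n - (n - i))" "n - i \<le> n" by auto
      then show "x \<in> (\<lambda>i. f (n - i)) ` {..n}" by blast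
    qed
    show "(\<lambda>i. f (n - i)) ` {..n} \<subseteq> f ` {..n}" by auto
  qed
  moreover have "v \<in> XV" using seg_sub(5)[OF assms] .
  ultimately show ?thesis unfolding seg_def using f by (intro conjI exI[of _ "\<lambda>i. f (n - i)"] exI[of _ n]) auto
qed

lemma seg_split:
  assumes "seg u v S" "p \<in> S" shows "dX u p + dX p v = dX u v"
proof -
  obtain f n where f: "spath XE rcg_src Xt f n" "f 0 = u" "f n = v" "S = f ` {..n}" "u \<in> XV"
    using assms unfolding seg_def by blast
  obtain i where i: "i \<le> n" "p = f i" using assms(2) f(4) by auto
  have f0: "f 0 \<in> XV" using f(2,5) by simp
  have "mg_vdist XE rcg_src Xt (f 0) (f i) = i - 0" using sp_dist[OF f(1) eiX cnX f0 le0 i(1)] .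
  moreover have "mg_vdist XE rcg_src Xt (f i) (f n) = n - i" using sp_dist[OF f(1) eiX cnX f0 i(1) order_refl] .
  moreover have "mg_vdist XE rcg_src Xt (f 0) (f n) = n - 0" using sp_dist[OF f(1) eiX cnX f0 le0 order_refl] .
  ultimately show ?thesis using i f by simp
qed

lemma seg_tri:
  assumes s1: "seg u v S1" and s2: "seg v w S2" and s3: "seg w u S3" and p: "p \<in> S1"
  shows "\<exists>q\<in>S2 \<union> S3. dX p q \<le> D"
proof -
  obtain f1 n1 where f1: "spath XE rcg_src Xt f1 n1" "f1 0 = u" "f1 n1 = v" "S1 = f1 ` {..n1}" "u \<in> XV"
    using s1 unfolding seg_def by blast
  obtain f2 n2 where f2: "spath XE rcg_src Xt f2 n2" "f2 0 = v" "f2 n2 = w" "S2 = f2 ` {..n2}"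
    using s2 unfolding seg_def by blast
  obtain f3 n3 where f3: "spath XE rcg_src Xt f3 n3" "f3 0 = w" "f3 n3 = u" "S3 = f3 ` {..n3}"
    using s3 unfolding seg_def by blast
  obtain i where i: "i \<le> n1" "p = f1 i" using p f1(4) by auto
  obtain j where "(j \<le> n2 \<and> dX (f1 i) (f2 j) \<le> D) \<or> (j \<le> n3 \<and> dX (f1 i) (f3 j) \<le> D)"
    using tri[OF f1(1) f2(1) f3(1), of i] f1 f2 f3 i by auto
  then show ?thesis using f2(4) f3(4) i(2) by auto
qed

lemma seg_qc:
  assumes s: "seg {h1} {h2} S" and h: "h1 \<in> H" "h2 \<in> H" and p: "p \<in> S"
  shows "\<exists>h\<in>H. dX p {h} \<le> Q"
proof -
  obtain f n where f: "spath XE rcg_src Xt f n" "f 0 = {h1}" "f n = {h2}" "S = f ` {..n}"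
    using s unfolding seg_def by blast
  obtain i where i: "i \<le> n" "p = f i" using p f(4) by auto
  show ?thesis using qc[OF f(1) h(1) f(2) h(2) f(3) i(1)] i(2) by simp
qed

lemma seg_ivt:
  assumes s: "seg u v S" and P: "P u" and Qv: "R v" and all: "\<forall>x\<in>S. P x \<or> R x"
  shows "\<exists>x\<in>S. P x \<and> (\<exists>y\<in>S. R y \<and> dX x y \<le> 1)"
proof (rule ccontr)
  assume neg: "\<not> ?thesis"
  obtain f n where f: "spath XE rcg_src Xt f n" "f 0 = u" "f n = v" "S = f ` {..n}" "u \<in> XV"
    using s unfolding seg_def by blast
  have "\<forall>k\<le>n. P (f k)"
  proof (intro allI impI)
    fix k assume "k \<le> n"
    then show "P (f k)"
    proof (induction k)
      case 0 then show ?case using P f(2) by simp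
    next
      case (Suc k)
      then have Pk: "P (f k)" by simp
      have adj: "mg_adj XE rcg_src Xt (f k) (f (Suc k))" using f(1) Suc.prems unfolding spath_def by simp
      have "dX (f k) (f (Suc k)) \<le> 1" using vd_adj[OF adj] by simp
      moreover have "f k \<in> S" "f (Suc k) \<in> S" using f(4) Suc.prems by auto
      ultimately have "\<not> R (f (Suc k))" using neg Pk by blast
      then show ?case using all \<open>f (Suc k) \<in> S\<close> by blast
    qed
  qed
  then have "P v" using f(3) by auto
  moreover have "v \<in> S" using seg_sub(3)[OF s] .
  moreover have "dX v v \<le> 1" by (simp add: vd_refl)
  ultimately show False using neg Qv by blast
qed

end

context hypctx
begin

abbreviation "YE \<equiv> rcg_E G H A"
abbreviation "YV \<equiv> rcg_V G H"
abbreviation "dY u v \<equiv> real (mg_vdist YE rcg_src Xt u v)"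
abbreviation "fH a \<equiv> dY (H #> a) H"

lemma Hs: "H \<subseteq> carrier G" using subgroup.subset[OF sub] .
lemma cnY: "conn YV YE rcg_src Xt" using connY[OF sub mg] .
lemma eiY: "edges_in YV YE rcg_src Xt" using edges_inY[OF pA sub] .

lemma dY_tri: "u \<in> YV \<Longrightarrow> v \<in> YV \<Longrightarrow> w \<in> YV \<Longrightarrow> dY u w \<le> dY u v + dY v w"
  using vd_tri[OF cnY] by (metis of_nat_add of_nat_le_iff)

lemma dY_sym: "u \<in> YV \<Longrightarrow> v \<in> YV \<Longrightarrow> dY u v = dY v u"
  using vd_sym[OF cnY] by metis

lemma HV: "H \<in> YV"
proof -
  have "H #> \<one> \<in> rcosets H" using rcosetsI[OF Hs one_closed] .
  then show ?thesis unfolding rcg_V_def using coset_mult_one[OF Hs] by simp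
qed

lemma cosV: "a \<in> carrier G \<Longrightarrow> H #> a \<in> YV"
  unfolding rcg_V_def using rcosetsI[OF Hs] by blast

lemma f_att: "a \<in> carrier G \<Longrightarrow> \<exists>h\<in>H. dX {a} {h} = fH a"
  using f_attained[OF sub mg] by (metis of_nat_eq_iff)

lemma f_le': "a \<in> carrier G \<Longrightarrow> h \<in> H \<Longrightarrow> fH a \<le> dX {a} {h}"
  using f_le[OF sub mg] by (metis of_nat_le_iff)

lemma sV: "g \<in> carrier G \<Longrightarrow> {g} \<in> XV" by (rule VX_mem)

lemma Hc: "h \<in> H \<Longrightarrow> h \<in> carrier G" using Hs by blast

lemma TD:
  assumes x: "x \<in> carrier G" and y: "y \<in> carrier G" and s: "seg {x} {y} S" and q: "q \<in> S" and h: "h \<in> H"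
  shows "fH x + fH y - dX {x} {y} \<le> 2 * dX q {h}"
proof -
  have qV: "q \<in> XV" using seg_sub(1)[OF s] q by blast
  have hV: "{h} \<in> XV" using sV[OF Hc[OF h]] .
  have xV: "{x} \<in> XV" using sV[OF x] .
  have yV: "{y} \<in> XV" using sV[OF y] .
  have "fH x \<le> dX {x} {h}" using f_le'[OF x h] .
  also have "\<dots> \<le> dX {x} q + dX q {h}" using dX_tri[OF xV qV hV] .
  finally have 1: "fH x \<le> dX {x} q + dX q {h}" .
  have "fH y \<le> dX {y} {h}" using f_le'[OF y h] .
  also have "\<dots> \<le> dX {y} q + dX q {h}" using dX_tri[OF yV qV hV] .
  finally have 2: "fH y \<le> dX {y} q + dX q {h}" .
  have 3: "dX {y} q = dX q {y}" using dX_sym[OF yV qV] .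
  have 4: "dX {x} q + dX q {y} = dX {x} {y}" using seg_split[OF s q] .
  show ?thesis using 1 2 3 4 by linarith
qed

lemma HL:
  assumes a: "a \<in> carrier G" and b: "b \<in> carrier G" and s: "seg {a} {b} S"
  shows "\<exists>p\<in>S. \<exists>h\<in>H. dX p {h} \<le> max 0 ((fH a + fH b - dX {a} {b}) / 2) + (4 * D + 2 + Q)"
proof -
  obtain ha where ha: "ha \<in> H" "dX {a} {ha} = fH a" using f_att[OF a] by blast
  obtain hb where hb: "hb \<in> H" "dX {b} {hb} = fH b" using f_att[OF b] by blast
  have aV: "{a} \<in> XV" and bV: "{b} \<in> XV" and haV: "{ha} \<in> XV" and hbV: "{hb} \<in> XV"
    using sV a b Hc ha(1) hb(1) by auto
  obtain S1 where S1: "seg {a} {ha} S1" using seg_exists[OF aV haV] by blast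
  obtain S2 where S2: "seg {ha} {hb} S2" using seg_exists[OF haV hbV] by blast
  obtain S3 where S3: "seg {hb} {b} S3" using seg_exists[OF hbV bV] by blast
  obtain Dg where Dg: "seg {a} {hb} Dg" using seg_exists[OF aV hbV] by blast
  have SV: "S \<subseteq> XV" "S1 \<subseteq> XV" "S2 \<subseteq> XV" "S3 \<subseteq> XV" "Dg \<subseteq> XV"
    using seg_sub(1) s S1 S2 S3 Dg by blast+
  have near: "\<exists>r\<in>S1 \<union> S2 \<union> S3. dX p r \<le> 2 * D" if p: "p \<in> S" for p
  proof -
    obtain q where q: "q \<in> S3 \<union> Dg" "dX p q \<le> D"
      using seg_tri[OF s seg_sym[OF S3] seg_sym[OF Dg] p] by blast
    show ?thesis
    proof (cases "q \<in> S3")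
      case True then show ?thesis using q D0 by (intro bexI[of _ q]) auto
    next
      case False
      then have qD: "q \<in> Dg" using q(1) by blast
      obtain r where r: "r \<in> S2 \<union> S1" "dX q r \<le> D"
        using seg_tri[OF Dg seg_sym[OF S2] seg_sym[OF S1] qD] by blast
      have "dX p r \<le> dX p q + dX q r" using dX_tri SV p qD r(1) by blast
      then show ?thesis using q r by (intro bexI[of _ r]) auto
    qed
  qed
  show ?thesis
  proof (cases "\<exists>p\<in>S. \<exists>r\<in>S2. dX p r \<le> 2 * D")
    case True
    then obtain p r where pr: "p \<in> S" "r \<in> S2" "dX p r \<le> 2 * D" by blast
    obtain h where h: "h \<in> H" "dX r {h} \<le> Q" using seg_qc[OF S2 ha(1) hb(1) pr(2)] by blast
    have "dX p {h} \<le> dX p r + dX r {h}" using dX_tri SV pr sV Hc h(1) by blast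
    then have "dX p {h} \<le> max 0 ((fH a + fH b - dX {a} {b}) / 2) + (4 * D + 2 + Q)"
      using pr(3) h(2) D0 by linarith
    then show ?thesis using pr(1) h(1) by blast
  next
    case False
    then have all: "\<forall>x\<in>S. (\<exists>r\<in>S1. dX x r \<le> 2 * D) \<or> (\<exists>r\<in>S3. dX x r \<le> 2 * D)"
      using near by blast
    have P0: "\<exists>r\<in>S1. dX {a} r \<le> 2 * D" using seg_sub(2)[OF S1] D0 by (intro bexI[of _ "{a}"]) (auto simp: vd_refl)
    have R0: "\<exists>r\<in>S3. dX {b} r \<le> 2 * D" using seg_sub(3)[OF S3] D0 by (intro bexI[of _ "{b}"]) (auto simp: vd_refl)
    obtain x y where xy: "x \<in> S" "\<exists>r\<in>S1. dX x r \<le> 2 * D" "y \<in> S" "\<exists>r\<in>S3. dX y r \<le> 2 * D" "dX x y \<le> 1"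
      using seg_ivt[OF s, of "\<lambda>x. \<exists>r\<in>S1. dX x r \<le> 2 * D" "\<lambda>x. \<exists>r\<in>S3. dX x r \<le> 2 * D", OF P0 R0 all] by blast
    obtain q1 where q1: "q1 \<in> S1" "dX x q1 \<le> 2 * D" using xy(2) by blast
    obtain q2 where q2: "q2 \<in> S3" "dX y q2 \<le> 2 * D" using xy(4) by blast
    have xV: "x \<in> XV" and yV: "y \<in> XV" and q1V: "q1 \<in> XV" and q2V: "q2 \<in> XV"
      using SV xy q1 q2 by blast+
    have e2: "dX x q2 \<le> 2 * D + 1" using dX_tri[OF xV yV q2V] xy(5) q2(2) by linarith
    have s1: "dX {a} q1 + dX q1 {ha} = dX {a} {ha}" using seg_split[OF S1 q1(1)] .
    have s3: "dX {hb} q2 + dX q2 {b} = dX {hb} {b}" using seg_split[OF S3 q2(1)] .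
    have sS: "dX {a} x + dX x {b} = dX {a} {b}" using seg_split[OF s xy(1)] .
    have t1: "dX {a} x \<le> dX {a} q1 + dX q1 x" using dX_tri[OF aV q1V xV] .
    have t2: "dX x {b} \<le> dX x q2 + dX q2 {b}" using dX_tri[OF xV q2V bV] .
    have t3: "dX x {ha} \<le> dX x q1 + dX q1 {ha}" using dX_tri[OF xV q1V haV] .
    have t4: "dX x {hb} \<le> dX x q2 + dX q2 {hb}" using dX_tri[OF xV q2V hbV] .
    have y1: "dX q1 x = dX x q1" using dX_sym[OF q1V xV] .
    have y2: "dX q2 {hb} = dX {hb} q2" using dX_sym[OF q2V hbV] .
    have y3: "dX {hb} {b} = dX {b} {hb}" using dX_sym[OF hbV bV] .
    let ?M = "max 0 ((fH a + fH b - dX {a} {b}) / 2) + (4 * D + 2 + Q)"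
    have k1: "fH a \<ge> dX {a} x - dX x q1 + dX q1 {ha}" using s1 t1 y1 ha(2) by linarith
    have k2: "fH b \<ge> dX x {b} - dX x q2 + dX {hb} q2" using s3 t2 y3 hb(2) by linarith
    have k3: "fH a + fH b - dX {a} {b} \<ge> dX q1 {ha} + dX {hb} q2 - dX x q1 - dX x q2"
      using k1 k2 sS by linarith
    have k4: "dX x {ha} + dX x {hb} \<le> dX x q1 + dX q1 {ha} + dX x q2 + dX {hb} q2"
      using t3 t4 y2 by linarith
    have k5: "dX x {ha} + dX x {hb} \<le> (fH a + fH b - dX {a} {b}) + 2 * (dX x q1 + dX x q2)"
      using k3 k4 by argo
    have k6: "dX x {ha} + dX x {hb} \<le> (fH a + fH b - dX {a} {b}) + 8 * D + 2"
      using k5 q1(2) e2 by argo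
    have k7: "(fH a + fH b - dX {a} {b}) / 2 \<le> max 0 ((fH a + fH b - dX {a} {b}) / 2)" by simp
    have "dX x {ha} \<le> ?M \<or> dX x {hb} \<le> ?M"
      using k6 k7 Q0 by argo
    then show ?thesis using xy(1) ha(1) hb(1) by blast
  qed
qed

definition prodY where "prodY U W = (dY U H + dY W H - dY U W) / 2"

lemma Y4o:
  assumes U: "U \<in> YV" and W: "W \<in> YV" and Z: "Z \<in> YV"
  shows "min (prodY U Z) (prodY Z W) - (5 * D + 2 + Q) \<le> prodY U W"
proof -
  obtain a where a: "a \<in> carrier G" "U = H #> a" using U unfolding rcg_V_def RCOSETS_def by blast
  obtain c0 where c0: "c0 \<in> carrier G" "Z = H #> c0" using Z unfolding rcg_V_def RCOSETS_def by blast
  obtain b0 where b0: "b0 \<in> carrier G" "W = H #> b0" using W unfolding rcg_V_def RCOSETS_def by blast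
  obtain c where c: "c \<in> carrier G" "H #> c = Z" "mg_vdist XE rcg_src Xt {a} {c} = mg_vdist YE rcg_src Xt U Z"
    using dY_attained[OF sub mg a(1) c0(1)] a(2) c0(2) by blast
  obtain b where b: "b \<in> carrier G" "H #> b = W" "mg_vdist XE rcg_src Xt {c} {b} = mg_vdist YE rcg_src Xt Z W"
    using dY_attained[OF sub mg c(1) b0(1)] c(2) b0(2) by blast
  have aV: "{a} \<in> XV" and bV: "{b} \<in> XV" and cV: "{c} \<in> XV" using sV a b c by auto
  obtain Sab where Sab: "seg {a} {b} Sab" using seg_exists[OF aV bV] by blast
  obtain Sac where Sac: "seg {a} {c} Sac" using seg_exists[OF aV cV] by blast
  obtain Scb where Scb: "seg {c} {b} Scb" using seg_exists[OF cV bV] by blast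
  obtain p h where ph: "p \<in> Sab" "h \<in> H"
    "dX p {h} \<le> max 0 ((fH a + fH b - dX {a} {b}) / 2) + (4 * D + 2 + Q)"
    using HL[OF a(1) b(1) Sab] by blast
  obtain q where q: "q \<in> Scb \<union> Sac" "dX p q \<le> D"
    using seg_tri[OF Sab seg_sym[OF Scb] seg_sym[OF Sac] ph(1)] by blast
  have pV: "p \<in> XV" using seg_sub(1)[OF Sab] ph(1) by blast
  have qV: "q \<in> XV" using seg_sub(1)[OF Scb] seg_sub(1)[OF Sac] q(1) by blast
  have hV: "{h} \<in> XV" using sV Hc ph(2) by blast
  have qh: "dX q {h} \<le> dX q p + dX p {h}" using dX_tri[OF qV pV hV] .
  have qp: "dX q p = dX p q" using dX_sym[OF qV pV] .
  have UWle1: "dY U W \<le> dX {a} {b}"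
    using dY_le[OF sub mg a(1) b(1) subgroup.one_closed[OF sub]] a(2) b(2) b(1) by simp
  have UWle2: "dY U W \<le> dY U H + dY H W" using dY_tri[OF U HV W] .
  have HW: "dY H W = dY W H" using dY_sym[OF HV W] .
  have r1: "dY U W \<le> dX {a} {b}" using UWle1 a(2) b(2) by simp
  have r2: "dY U W \<le> dY U H + dY W H" using UWle2 HW by simp
  have A1: "(fH a + fH b - dX {a} {b}) / 2 \<le> prodY U W"
    unfolding prodY_def using r1 a(2) b(2) by (simp add: divide_right_mono)
  have A2: "0 \<le> prodY U W" unfolding prodY_def using r2 by simp
  have pUW: "max 0 ((fH a + fH b - dX {a} {b}) / 2) \<le> prodY U W"
    using A1 A2 by simp
  have fc: "fH c = dY Z H" using c(2) by simp
  show ?thesis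
  proof (cases "q \<in> Sac")
    case True
    have "fH a + fH c - dX {a} {c} \<le> 2 * dX q {h}" using TD[OF a(1) c(1) Sac True ph(2)] .
    then have "prodY U Z \<le> dX q {h}" unfolding prodY_def using c(3) fc a(2) by simp
    then show ?thesis using qh qp q(2) ph(3) pUW by linarith
  next
    case False
    then have qS: "q \<in> Scb" using q(1) by blast
    have "fH c + fH b - dX {c} {b} \<le> 2 * dX q {h}" using TD[OF c(1) b(1) Scb qS ph(2)] .
    then have "prodY Z W \<le> dX q {h}" unfolding prodY_def using b(3) fc b(2) by simp
    then show ?thesis using qh qp q(2) ph(3) pUW by linarith
  qed
qed

end

lemma alg_core:
  fixes xy zt A B C E K :: real
  assumes "min C B - K \<le> xy" "min A E - K \<le> xy" "min A C - K \<le> zt" "min E B - K \<le> zt"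
  shows "min (A + B) (C + E) - 2 * K \<le> xy + zt"
  using assms unfolding min_def by (smt (verit))

lemma four_point_alg:
  fixes d :: "'v \<Rightarrow> 'v \<Rightarrow> real"
  assumes sym: "\<And>x y. x \<in> S \<Longrightarrow> y \<in> S \<Longrightarrow> d x y = d y x"
    and hyp: "\<And>x y z. x \<in> S \<Longrightarrow> y \<in> S \<Longrightarrow> z \<in> S \<Longrightarrow>
       min ((d x bp + d z bp - d x z) / 2) ((d z bp + d y bp - d z y) / 2) - K \<le> (d x bp + d y bp - d x y) / 2"
    and x: "x \<in> S" and y: "y \<in> S" and z: "z \<in> S" and t: "t \<in> S"
  shows "d x y + d z t \<le> max (d x z + d y t) (d x t + d y z) + 4 * K"
proof -
  have h1: "min ((d x bp + d t bp - d x t) / 2) ((d t bp + d y bp - d t y) / 2) - K \<le> (d x bp + d y bp - d x y) / 2"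
    using hyp[OF x y t] .
  have h2: "min ((d x bp + d z bp - d x z) / 2) ((d z bp + d y bp - d z y) / 2) - K \<le> (d x bp + d y bp - d x y) / 2"
    using hyp[OF x y z] .
  have h3: "min ((d z bp + d x bp - d z x) / 2) ((d x bp + d t bp - d x t) / 2) - K \<le> (d z bp + d t bp - d z t) / 2"
    using hyp[OF z t x] .
  have h4: "min ((d z bp + d y bp - d z y) / 2) ((d y bp + d t bp - d y t) / 2) - K \<le> (d z bp + d t bp - d z t) / 2"
    using hyp[OF z t y] .
  have s1: "d t y = d y t" using sym t y by blast
  have s2: "d z x = d x z" using sym z x by blast
  have s3: "d z y = d y z" using sym z y by blast
  have core: "min ((d x bp + d z bp - d x z) / 2 + (d y bp + d t bp - d y t) / 2)
                   ((d x bp + d t bp - d x t) / 2 + (d y bp + d z bp - d y z) / 2) - 2 * K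
     \<le> (d x bp + d y bp - d x y) / 2 + (d z bp + d t bp - d z t) / 2"
    apply (rule alg_core)
    using h1 s1 apply (simp add: add.commute)
    using h2 s3 apply (simp add: add.commute)
    using h3 s2 apply (simp add: add.commute)
    using h4 s1 s3 apply (simp add: add.commute)
    done
  show ?thesis
  proof (cases "d x z + d y t \<le> d x t + d y z")
    case True
    then have "(d x bp + d t bp - d x t) / 2 + (d y bp + d z bp - d y z) / 2 \<le>
       (d x bp + d z bp - d x z) / 2 + (d y bp + d t bp - d y t) / 2" by (simp add: field_simps)
    note m = min.absorb2[OF this]
    have "(d x bp + d t bp - d x t) / 2 + (d y bp + d z bp - d y z) / 2 - 2 * K
     \<le> (d x bp + d y bp - d x y) / 2 + (d z bp + d t bp - d z t) / 2" using core unfolding m by simp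
    then show ?thesis using True by (simp add: field_simps max_def)
  next
    case False
    then have "(d x bp + d z bp - d x z) / 2 + (d y bp + d t bp - d y t) / 2 \<le>
       (d x bp + d t bp - d x t) / 2 + (d y bp + d z bp - d y z) / 2" by (simp add: field_simps)
    note m = min.absorb1[OF this]
    have "(d x bp + d z bp - d x z) / 2 + (d y bp + d t bp - d y t) / 2 - 2 * K
     \<le> (d x bp + d y bp - d x y) / 2 + (d z bp + d t bp - d z t) / 2" using core unfolding m by simp
    then show ?thesis using False by (simp add: field_simps max_def)
  qed
qed

context hypctx
begin

lemma Y4:
  assumes "U \<in> YV" "W \<in> YV" "Z \<in> YV" "T \<in> YV"
  shows "dY U W + dY Z T \<le> max (dY U Z + dY W T) (dY U T + dY W Z) + 4 * (5 * D + 2 + Q)"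
proof (rule four_point_alg[where S = YV and bp = H])
  show "\<And>x y. x \<in> YV \<Longrightarrow> y \<in> YV \<Longrightarrow> dY x y = dY y x" using dY_sym by blast
  show "\<And>x y z. x \<in> YV \<Longrightarrow> y \<in> YV \<Longrightarrow> z \<in> YV \<Longrightarrow>
       min ((dY x H + dY z H - dY x z) / 2) ((dY z H + dY y H - dY z y) / 2) - (5 * D + 2 + Q)
       \<le> (dY x H + dY y H - dY x y) / 2"
    using Y4o unfolding prodY_def by blast
qed (use assms in auto)

lemma bigon:
  assumes ga: "rcg_geodesic G \<pi> H A \<alpha> La" and gb: "rcg_geodesic G \<pi> H A \<beta> Lb"
    and e0: "\<alpha> 0 = \<beta> 0" and e1: "\<alpha> La = \<beta> Lb"
  shows "La = Lb \<and> (\<forall>t\<in>{0..La}. mg_dist YE rcg_src Xt (\<alpha> t) (\<beta> t) \<le> 4 * (5 * D + 2 + Q) + 8)"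
proof -
  have La0: "0 \<le> La" and Lb0: "0 \<le> Lb" using ga gb unfolding mg_geodesic_def by auto
  have pa: "\<And>s. s \<in> {0..La} \<Longrightarrow> \<alpha> s \<in> mg_points YV YE" using ga unfolding mg_geodesic_def by blast
  have pb: "\<And>s. s \<in> {0..Lb} \<Longrightarrow> \<beta> s \<in> mg_points YV YE" using gb unfolding mg_geodesic_def by blast
  have da: "\<And>s u. s \<in> {0..La} \<Longrightarrow> u \<in> {0..La} \<Longrightarrow> mg_dist YE rcg_src Xt (\<alpha> s) (\<alpha> u) = \<bar>s - u\<bar>"
    using ga unfolding mg_geodesic_def by blast
  have db: "\<And>s u. s \<in> {0..Lb} \<Longrightarrow> u \<in> {0..Lb} \<Longrightarrow> mg_dist YE rcg_src Xt (\<beta> s) (\<beta> u) = \<bar>s - u\<bar>"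
    using gb unfolding mg_geodesic_def by blast
  have "La = mg_dist YE rcg_src Xt (\<alpha> 0) (\<alpha> La)" using da[of 0 La] La0 by simp
  also have "\<dots> = mg_dist YE rcg_src Xt (\<beta> 0) (\<beta> Lb)" using e0 e1 by simp
  also have "\<dots> = Lb" using db[of 0 Lb] Lb0 by simp
  finally have LL: "La = Lb" .
  have "mg_dist YE rcg_src Xt (\<alpha> t) (\<beta> t) \<le> 4 * (5 * D + 2 + Q) + 8" if t: "t \<in> {0..La}" for t
  proof -
    have t0: "0 \<in> {0..La}" and tL: "La \<in> {0..La}" using La0 by auto
    have tb: "t \<in> {0..Lb}" and t0b: "0 \<in> {0..Lb}" and tLb: "Lb \<in> {0..Lb}" using t LL La0 by auto
    define x where "x = \<alpha> t"
    define x' where "x' = \<beta> t"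
    define y where "y = \<alpha> 0"
    define z where "z = \<alpha> La"
    have px: "x \<in> mg_points YV YE" using pa[OF t] x_def by simp
    have px': "x' \<in> mg_points YV YE" using pb[OF tb] x'_def by simp
    have py: "y \<in> mg_points YV YE" using pa[OF t0] y_def by simp
    have pz: "z \<in> mg_points YV YE" using pa[OF tL] z_def by simp
    obtain vx ax where vx: "(vx, ax) \<in> mg_ends rcg_src Xt x" by (meson ends_ex)
    obtain vx' ax' where vx': "(vx', ax') \<in> mg_ends rcg_src Xt x'" by (meson ends_ex)
    obtain vy ay where vy: "(vy, ay) \<in> mg_ends rcg_src Xt y" by (meson ends_ex)
    obtain vz az where vz: "(vz, az) \<in> mg_ends rcg_src Xt z" by (meson ends_ex)
    have V: "vx \<in> YV" "vx' \<in> YV" "vy \<in> YV" "vz \<in> YV"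
      using ends_props[OF px eiY vx] ends_props[OF px' eiY vx'] ends_props[OF py eiY vy] ends_props[OF pz eiY vz]
      by auto
    have d1: "mg_dist YE rcg_src Xt x x' \<le> dY vx vx' + 2" using dist_upper[OF px px' eiY vx vx'] .
    have d2: "mg_dist YE rcg_src Xt z y \<le> dY vz vy + 2" using dist_upper[OF pz py eiY vz vy] .
    have d3: "dY vx vz \<le> mg_dist YE rcg_src Xt x z + 2" using dist_lower[OF px pz eiY cnY vx vz] .
    have d4: "dY vx' vy \<le> mg_dist YE rcg_src Xt x' y + 2" using dist_lower[OF px' py eiY cnY vx' vy] .
    have d5: "dY vx vy \<le> mg_dist YE rcg_src Xt x y + 2" using dist_lower[OF px py eiY cnY vx vy] .
    have d6: "dY vx' vz \<le> mg_dist YE rcg_src Xt x' z + 2" using dist_lower[OF px' pz eiY cnY vx' vz] .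
    have m1: "mg_dist YE rcg_src Xt z y = La" using da[OF tL t0] La0 z_def y_def by simp
    have m2: "mg_dist YE rcg_src Xt x z = La - t" using da[OF t tL] t x_def z_def by simp
    have m3: "mg_dist YE rcg_src Xt x' y = t" using db[OF tb t0b] t e0 x'_def y_def by simp
    have m4: "mg_dist YE rcg_src Xt x y = t" using da[OF t t0] t x_def y_def by simp
    have m5: "mg_dist YE rcg_src Xt x' z = La - t" using db[OF tb tLb] t e1 LL x'_def z_def by simp
    have fp: "dY vx vx' + dY vz vy \<le> max (dY vx vz + dY vx' vy) (dY vx vy + dY vx' vz) + 4 * (5 * D + 2 + Q)"
      using Y4[OF V(1,2,4,3)] .
    have "mg_dist YE rcg_src Xt x x' \<le> 4 * (5 * D + 2 + Q) + 8"
      using fp d1 d2 d3 d4 d5 d6 m1 m2 m3 m4 m5 unfolding max_def by (smt (verit))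
    then show ?thesis using x_def x'_def by simp
  qed
  then show ?thesis using LL by blast
qed

end

theorem theorem3p4:
  fixes G :: "('g, 'b) monoid_scheme" and A :: "'a set" and \<pi> :: "'a \<Rightarrow> 'g" and H :: "'g set"
  assumes "hyperbolic_group G A \<pi>"
    and "subgroup H G"
    and "quasiconvex G A \<pi> H"
  shows "\<exists>\<delta>'\<ge>0. \<forall>\<alpha> La \<beta> Lb.
           rcg_geodesic G \<pi> H A \<alpha> La \<and> rcg_geodesic G \<pi> H A \<beta> Lb \<and>
           \<alpha> 0 = \<beta> 0 \<and> \<alpha> La = \<beta> Lb \<longrightarrow>
           \<alpha> ` {0..La} \<subseteq> rcg_nbhd G \<pi> H A \<delta>' (\<beta> ` {0..Lb}) \<and>
           \<beta> ` {0..Lb} \<subseteq> rcg_nbhd G \<pi> H A \<delta>' (\<alpha> ` {0..La})"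
proof -
  have grp: "group G" and mg: "marked_gen_set G A \<pi>"
    using assms(1) unfolding hyperbolic_group_def by auto
  obtain \<delta> where \<delta>0: "0 \<le> \<delta>" and thin: "\<forall>\<alpha> La \<beta> Lb \<gamma> Lc.
        rcg_geodesic G \<pi> {\<one>\<^bsub>G\<^esub>} A \<alpha> La \<and> rcg_geodesic G \<pi> {\<one>\<^bsub>G\<^esub>} A \<beta> Lb \<and>
        rcg_geodesic G \<pi> {\<one>\<^bsub>G\<^esub>} A \<gamma> Lc \<and>
        \<alpha> La = \<beta> 0 \<and> \<beta> Lb = \<gamma> 0 \<and> \<gamma> Lc = \<alpha> 0 \<longrightarrow>
        \<alpha> ` {0..La} \<subseteq> rcg_nbhd G \<pi> {\<one>\<^bsub>G\<^esub>} A \<delta> (\<beta> ` {0..Lb} \<union> \<gamma> ` {0..Lc})"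
    using assms(1) unfolding hyperbolic_group_def by blast
  obtain C where C0: "C > 0" and qcC: "\<forall>\<alpha> L. rcg_geodesic G \<pi> {\<one>\<^bsub>G\<^esub>} A \<alpha> L \<and>
        \<alpha> 0 \<in> (\<lambda>h. Vx {h}) ` H \<and> \<alpha> L \<in> (\<lambda>h. Vx {h}) ` H \<longrightarrow>
        \<alpha> ` {0..L} \<subseteq> rcg_nbhd G \<pi> {\<one>\<^bsub>G\<^esub>} A C ((\<lambda>h. Vx {h}) ` H)"
    using assms(3) unfolding quasiconvex_def by blast
  interpret hc: hypctx G A \<pi> H "\<delta> + 2" C
  proof (rule hypctx.intro[OF grp], rule hypctx_axioms.intro)
    show "marked_gen_set G A \<pi>" by (rule mg)
    show "subgroup H G" by (rule assms(2))
    show "0 \<le> \<delta> + 2" using \<delta>0 by simp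
    show "0 \<le> C" using C0 by simp
    show "\<And>f1 n1 f2 n2 f3 n3 i.
       spath (rcg_E G {\<one>\<^bsub>G\<^esub>} A) rcg_src (rcg_tgt G \<pi>) f1 n1 \<Longrightarrow>
       spath (rcg_E G {\<one>\<^bsub>G\<^esub>} A) rcg_src (rcg_tgt G \<pi>) f2 n2 \<Longrightarrow>
       spath (rcg_E G {\<one>\<^bsub>G\<^esub>} A) rcg_src (rcg_tgt G \<pi>) f3 n3 \<Longrightarrow>
       f1 0 \<in> rcg_V G {\<one>\<^bsub>G\<^esub>} \<Longrightarrow> f1 n1 = f2 0 \<Longrightarrow> f2 n2 = f3 0 \<Longrightarrow> f3 n3 = f1 0 \<Longrightarrow> i \<le> n1 \<Longrightarrow>
       \<exists>j. (j \<le> n2 \<and> real (mg_vdist (rcg_E G {\<one>\<^bsub>G\<^esub>} A) rcg_src (rcg_tgt G \<pi>) (f1 i) (f2 j)) \<le> \<delta> + 2) \<or>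
           (j \<le> n3 \<and> real (mg_vdist (rcg_E G {\<one>\<^bsub>G\<^esub>} A) rcg_src (rcg_tgt G \<pi>) (f1 i) (f3 j)) \<le> \<delta> + 2)"
      using group.XT[OF grp mg thin] by blast
    show "\<And>f n h1 h2 i. spath (rcg_E G {\<one>\<^bsub>G\<^esub>} A) rcg_src (rcg_tgt G \<pi>) f n \<Longrightarrow>
       h1 \<in> H \<Longrightarrow> f 0 = {h1} \<Longrightarrow> h2 \<in> H \<Longrightarrow> f n = {h2} \<Longrightarrow> i \<le> n \<Longrightarrow>
       \<exists>h\<in>H. real (mg_vdist (rcg_E G {\<one>\<^bsub>G\<^esub>} A) rcg_src (rcg_tgt G \<pi>) (f i) {h}) \<le> C"
      using group.XQ[OF grp mg qcC _ assms(2)] by blast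
  qed
  define K where "K = 4 * (5 * (\<delta> + 2) + 2 + C) + 8"
  have K0: "0 \<le> K" unfolding K_def using \<delta>0 C0 by simp
  have one: "\<alpha> ` {0..La} \<subseteq> rcg_nbhd G \<pi> H A K (\<beta> ` {0..Lb})"
    if ga: "rcg_geodesic G \<pi> H A \<alpha> La" and gb: "rcg_geodesic G \<pi> H A \<beta> Lb"
      and e0: "\<alpha> 0 = \<beta> 0" and e1: "\<alpha> La = \<beta> Lb" for \<alpha> La \<beta> Lb
  proof
    fix x assume "x \<in> \<alpha> ` {0..La}"
    then obtain t where t: "t \<in> {0..La}" "x = \<alpha> t" by blast
    have bg: "La = Lb \<and> (\<forall>t\<in>{0..La}. mg_dist (rcg_E G H A) rcg_src (rcg_tgt G \<pi>) (\<alpha> t) (\<beta> t) \<le> K)"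
      using hc.bigon[OF ga gb e0 e1] unfolding K_def .
    have px: "x \<in> mg_points (rcg_V G H) (rcg_E G H A)" using ga t unfolding mg_geodesic_def by blast
    have "\<beta> t \<in> \<beta> ` {0..Lb}" using t bg by auto
    moreover have "mg_dist (rcg_E G H A) rcg_src (rcg_tgt G \<pi>) x (\<beta> t) \<le> K" using bg t by blast
    ultimately show "x \<in> rcg_nbhd G \<pi> H A K (\<beta> ` {0..Lb})"
      unfolding mg_nbhd_def using px by blast
  qed
  show ?thesis
  proof (intro exI[of _ K] conjI allI impI)
    show "0 \<le> K" by (rule K0)
  next
    fix \<alpha> La \<beta> Lb
    assume h: "rcg_geodesic G \<pi> H A \<alpha> La \<and> rcg_geodesic G \<pi> H A \<beta> Lb \<and> \<alpha> 0 = \<beta> 0 \<and> \<alpha> La = \<beta> Lb"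
    show "\<alpha> ` {0..La} \<subseteq> rcg_nbhd G \<pi> H A K (\<beta> ` {0..Lb})" using one h by blast
    show "\<beta> ` {0..Lb} \<subseteq> rcg_nbhd G \<pi> H A K (\<alpha> ` {0..La})" using one h by metis
  qed
qed


end
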